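(* Let $M$ be a pointed metric space such that the set $M'$ of cluster points of $M$ is infinite, and let $X$ be a non-zero Banach space. Then the norm of the bidual $(\mathcal F(M)\widehat{\otimes}_\pi X)^{**}$ is octahedral.
   Context: All Banach spaces are real. $\mathcal F(M)$ is the Lipschitz-free space over $M$ (closed linear span of evaluation functionals $\delta_p$ in the dual of the space $\mathrm{Lip}_0(M)$ of real Lipschitz functions vanishing at the base point), $\widehat{\otimes}_\pi$ is the projective tensor product. A Banach space $Z$ is octahedral if for every $x_1,\dots,x_n\in S_Z$ and $\varepsilon>0$ there is $y\in S_Z$ with $\|x_i-y\|\ge 2-\varepsilon$ for all $i$. *)

theory Defs
  imports "HOL-Analysis.Analysis"
begin

definition lip0_ball :: "'m::metric_space \<Rightarrow> ('m \<Rightarrow> real) set" where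
  "lip0_ball p0 = {f. f p0 = 0 \<and> 1-lipschitz_on UNIV f}"

text \<open>Dual norm on Lip_0(M)^* (functionals are only evaluated on Lip_0(M)).\<close>
definition lipdual_norm :: "'m::metric_space \<Rightarrow> (('m \<Rightarrow> real) \<Rightarrow> real) \<Rightarrow> real" where
  "lipdual_norm p0 mu = Sup {\<bar>mu f\<bar> | f. f \<in> lip0_ball p0}"

text \<open>Lipschitz-free space F(M): norm-closure in Lip_0(M)^* of the linear span of the
  evaluation functionals delta_p.\<close>
definition free_space :: "'m::metric_space \<Rightarrow> (('m \<Rightarrow> real) \<Rightarrow> real) set" where
  "free_space p0 = {mu. \<forall>e>0. \<exists>(n::nat) (a::nat \<Rightarrow> real) (p::nat \<Rightarrow> 'm).
      \<forall>f\<in>lip0_ball p0. \<bar>mu f - (\<Sum>i<n. a i * f (p i))\<bar> \<le> e}"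

text \<open>Dual of the projective tensor product F(M) (x)_pi X, realised (canonically, isometrically)
  as the space of bounded bilinear forms on F(M) x X with the usual norm.\<close>
definition ptensor_dual :: "'m::metric_space \<Rightarrow>
    ((('m \<Rightarrow> real) \<Rightarrow> real) \<Rightarrow> 'x::real_normed_vector \<Rightarrow> real) set" where
  "ptensor_dual p0 = {B.
      (\<forall>mu\<in>free_space p0. \<forall>x y. B mu (x + y) = B mu x + B mu y) \<and>
      (\<forall>mu\<in>free_space p0. \<forall>c x. B mu (c *\<^sub>R x) = c * B mu x) \<and>
      (\<forall>mu\<in>free_space p0. \<forall>nu\<in>free_space p0. \<forall>x.
          B (\<lambda>f. mu f + nu f) x = B mu x + B nu x) \<and>
      (\<forall>mu\<in>free_space p0. \<forall>c x. B (\<lambda>f. c * mu f) x = c * B mu x) \<and>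
      (\<exists>K. \<forall>mu\<in>free_space p0. \<forall>x. \<bar>B mu x\<bar> \<le> K * lipdual_norm p0 mu * norm x)}"

definition ptensor_dual_norm :: "'m::metric_space \<Rightarrow>
    ((('m \<Rightarrow> real) \<Rightarrow> real) \<Rightarrow> 'x::real_normed_vector \<Rightarrow> real) \<Rightarrow> real" where
  "ptensor_dual_norm p0 B = Sup {\<bar>B mu x\<bar> | mu x. mu \<in> free_space p0 \<and>
      lipdual_norm p0 mu \<le> 1 \<and> norm x \<le> 1}"

text \<open>Bidual (F(M) (x)_pi X)^{**}: bounded linear functionals on the dual, with the dual norm.\<close>
definition ptensor_bidual :: "'m::metric_space \<Rightarrow>
    (((('m \<Rightarrow> real) \<Rightarrow> real) \<Rightarrow> 'x::real_normed_vector \<Rightarrow> real) \<Rightarrow> real) set" where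
  "ptensor_bidual p0 = {Phi.
      (\<forall>B\<in>ptensor_dual p0. \<forall>C\<in>ptensor_dual p0.
          Phi (\<lambda>mu x. B mu x + C mu x) = Phi B + Phi C) \<and>
      (\<forall>B\<in>ptensor_dual p0. \<forall>c. Phi (\<lambda>mu x. c * B mu x) = c * Phi B) \<and>
      (\<exists>K. \<forall>B\<in>ptensor_dual p0. \<bar>Phi B\<bar> \<le> K * ptensor_dual_norm p0 B)}"

definition ptensor_bidual_norm :: "'m::metric_space \<Rightarrow>
    (((('m \<Rightarrow> real) \<Rightarrow> real) \<Rightarrow> 'x::real_normed_vector \<Rightarrow> real) \<Rightarrow> real) \<Rightarrow> real" where
  "ptensor_bidual_norm p0 Phi = Sup {\<bar>Phi B\<bar> | B. B \<in> ptensor_dual p0 \<and>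
      ptensor_dual_norm p0 B \<le> 1}"

text \<open>Octahedrality of a normed space whose elements are real-valued functions
  (vector operations pointwise), given by its carrier V and norm nrm.\<close>
definition octahedral_fun_space :: "('a \<Rightarrow> real) set \<Rightarrow> (('a \<Rightarrow> real) \<Rightarrow> real) \<Rightarrow> bool" where
  "octahedral_fun_space V nrm \<longleftrightarrow>
     (\<forall>(n::nat) (z::nat \<Rightarrow> 'a \<Rightarrow> real) (e::real).
        (\<forall>i<n. z i \<in> V \<and> nrm (z i) = 1) \<and> e > 0 \<longrightarrow>
        (\<exists>y\<in>V. nrm y = 1 \<and> (\<forall>i<n. nrm (\<lambda>t. z i t - y t) \<ge> 2 - e)))"

end

theory Submission
  imports Defs
begin

definition hbg :: "('x::real_normed_vector \<times> real) set \<Rightarrow> bool" where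
 "hbg G \<longleftrightarrow> (\<forall>x a b. (x,a)\<in>G \<longrightarrow> (x,b)\<in>G \<longrightarrow> a=b) \<and>
   (\<forall>x a y b. (x,a)\<in>G \<longrightarrow> (y,b)\<in>G \<longrightarrow> (x+y,a+b)\<in>G) \<and>
   (\<forall>x a c. (x,a)\<in>G \<longrightarrow> (c *\<^sub>R x, c*a)\<in>G) \<and> (\<forall>x a. (x,a)\<in>G \<longrightarrow> a \<le> norm x)"

lemma hbg_chain:
  assumes C: "C \<in> chains {G. hbg G \<and> G0 \<subseteq> G}" and ne: "C \<noteq> {}"
  shows "hbg (\<Union>C)"
proof -
  have ch: "\<And>X Y. X\<in>C \<Longrightarrow> Y\<in>C \<Longrightarrow> X \<subseteq> Y \<or> Y \<subseteq> X" and h: "\<And>X. X\<in>C \<Longrightarrow> hbg X"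
    using C by (auto simp: chains_def chain_subset_def)
  have two: "\<exists>Z\<in>C. p \<in> Z \<and> q \<in> Z" if pq: "p \<in> \<Union>C" "q \<in> \<Union>C" for p q
  proof -
    obtain X Y where "X\<in>C" "Y\<in>C" "p\<in>X" "q\<in>Y" using pq by (meson UnionE)
    then show ?thesis using ch[of X Y] by auto
  qed
  show ?thesis unfolding hbg_def
  proof (intro conjI allI impI)
    fix x a b assume "(x,a) \<in> \<Union>C" "(x,b) \<in> \<Union>C"
    then obtain Z where "Z\<in>C" "(x,a)\<in>Z" "(x,b)\<in>Z" using two by blast
    then show "a = b" using h[of Z] unfolding hbg_def by blast
  next
    fix x a y b assume "(x,a) \<in> \<Union>C" "(y,b) \<in> \<Union>C"
    then obtain Z where "Z\<in>C" "(x,a)\<in>Z" "(y,b)\<in>Z" using two by blast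
    then show "(x+y,a+b) \<in> \<Union>C" using h[of Z] unfolding hbg_def by blast
  next
    fix x a c assume "(x,a) \<in> \<Union>C"
    then obtain Z where "Z\<in>C" "(x,a)\<in>Z" by blast
    then show "(c *\<^sub>R x, c*a) \<in> \<Union>C" using h[of Z] unfolding hbg_def by blast
  next
    fix x a assume "(x,a) \<in> \<Union>C"
    then obtain Z where "Z\<in>C" "(x,a)\<in>Z" by blast
    then show "a \<le> norm x" using h[of Z] unfolding hbg_def by blast
  qed
qed

lemma hbg_extend:
  fixes M :: "('x::real_normed_vector \<times> real) set"
  assumes M: "hbg M" and z: "\<forall>a. (z,a) \<notin> M" and ne: "(0,0) \<in> M"
  shows "\<exists>M'. hbg M' \<and> M \<subset> M'"
proof -
  have fn: "\<And>x a b. (x,a)\<in>M \<Longrightarrow> (x,b)\<in>M \<Longrightarrow> a=b"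
    and add: "\<And>x a y b. (x,a)\<in>M \<Longrightarrow> (y,b)\<in>M \<Longrightarrow> (x+y,a+b)\<in>M"
    and scl: "\<And>x a c. (x,a)\<in>M \<Longrightarrow> (c *\<^sub>R x, c*a)\<in>M"
    and dom: "\<And>x a. (x,a)\<in>M \<Longrightarrow> a \<le> norm x" using M unfolding hbg_def by blast+
  have key: "a - norm (x - z) \<le> norm (y + z) - b" if "(x,a)\<in>M" "(y,b)\<in>M" for x a y b
  proof -
    have "a + b \<le> norm (x + y)" using dom[OF add[OF that]] .
    also have "\<dots> \<le> norm (x - z) + norm (y + z)"
      using norm_triangle_ineq[of "x - z" "y + z"] by simp
    finally show ?thesis by simp
  qed
  define S where "S = {a - norm (x - z) | x a. (x,a) \<in> M}"
  define r where "r = Sup S"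
  have Sne: "S \<noteq> {}" using ne unfolding S_def by blast
  have Sbd: "bdd_above S" unfolding S_def bdd_above_def
    using key[OF _ ne] by auto
  have r1: "a - norm (x - z) \<le> r" if "(x,a)\<in>M" for x a
    unfolding r_def by (rule cSup_upper[OF _ Sbd]) (use that S_def in blast)
  have r2: "r \<le> norm (y + z) - b" if "(y,b)\<in>M" for y b
    unfolding r_def by (rule cSup_least[OF Sne]) (use key that S_def in blast)
  define M' where "M' = {(x + t *\<^sub>R z, a + t * r) | x a t. (x,a) \<in> M}"
  have uniq: "x = x' \<and> t = t'" if "(x,a)\<in>M" "(x',a')\<in>M" "x + t *\<^sub>R z = x' + t' *\<^sub>R z" for x a x' a' t t'
  proof (cases "t = t'")
    case True then show ?thesis using that by simp
  next
    case False
    have "(x + (-1) *\<^sub>R x', a + (-1) * a') \<in> M" using add[OF that(1) scl[OF that(2)]] .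
    then have "((1/(t'-t)) *\<^sub>R (x - x'), (1/(t'-t)) * (a - a')) \<in> M" using scl by fastforce
    moreover have "(1/(t'-t)) *\<^sub>R (x - x') = z"
    proof -
      have "x - x' = (t' - t) *\<^sub>R z" using that(3) by (simp add: algebra_simps)
      then show ?thesis using False by simp
    qed
    ultimately show ?thesis using z by auto
  qed
  have domM': "b \<le> norm y" if yM: "(y,b) \<in> M'" for y b
  proof -
    obtain x a t where yb: "y = x + t *\<^sub>R z" "b = a + t * r" "(x,a)\<in>M" using yM M'_def by blast
    consider "t = 0" | "t > 0" | "t < 0" by linarith
    then show ?thesis
    proof cases
      case 1 then show ?thesis using yb dom by simp
    next
      case 2
      have "r \<le> norm ((1/t) *\<^sub>R x + z) - (1/t) * a" using r2[OF scl[OF yb(3)]] .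
      then have "t * r \<le> t * (norm ((1/t) *\<^sub>R x + z) - (1/t) * a)" using 2 by (simp add: mult_left_mono)
      also have "\<dots> = norm (t *\<^sub>R ((1/t) *\<^sub>R x + z)) - a" using 2 by (simp add: right_diff_distrib)
      also have "t *\<^sub>R ((1/t) *\<^sub>R x + z) = x + t *\<^sub>R z" using 2 by (simp add: scaleR_add_right)
      finally show ?thesis using yb by simp
    next
      case 3
      define s where "s = -t"
      have s: "s > 0" using 3 s_def by simp
      define u where "u = (1/s) *\<^sub>R x - z"
      have "(1/s) * a - norm u \<le> r" using r1[OF scl[OF yb(3)], of "1/s"] unfolding u_def .
      then have "s * ((1/s) * a - norm u) \<le> s * r" using s by (simp add: mult_left_mono)
      then have "a - s * norm u \<le> s * r" using s by (simp add: right_diff_distrib)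
      moreover have "s * norm u = norm (x + t *\<^sub>R z)"
      proof -
        have "s *\<^sub>R u = x + t *\<^sub>R z" using s unfolding u_def s_def by (simp add: scaleR_diff_right)
        then show ?thesis using s by (metis abs_of_pos norm_scaleR)
      qed
      ultimately show ?thesis using yb s_def by simp
    qed
  qed
  have inM': "(x + t *\<^sub>R z, a + t * r) \<in> M'" if "(x,a) \<in> M" for x a t
    unfolding M'_def using that by blast
  have "hbg M'" unfolding hbg_def
  proof (intro conjI allI impI)
    fix y b b' assume "(y,b) \<in> M'" "(y,b') \<in> M'"
    then obtain x a t x' a' t' where "y = x + t *\<^sub>R z" "b = a + t * r" "(x,a)\<in>M"
      "y = x' + t' *\<^sub>R z" "b' = a' + t' * r" "(x',a')\<in>M" unfolding M'_def by blast
    then show "b = b'" using uniq[of x a x' a' t t'] fn by auto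
  next
    fix y b y' b' assume "(y,b) \<in> M'" "(y',b') \<in> M'"
    then obtain x a t x' a' t' where "y = x + t *\<^sub>R z" "b = a + t * r" "(x,a)\<in>M"
      "y' = x' + t' *\<^sub>R z" "b' = a' + t' * r" "(x',a')\<in>M" unfolding M'_def by blast
    then show "(y + y', b + b') \<in> M'" using inM'[OF add, of x a x' a' "t+t'"]
      by (simp add: algebra_simps)
  next
    fix y b c assume "(y,b) \<in> M'"
    then obtain x a t where "y = x + t *\<^sub>R z" "b = a + t * r" "(x,a)\<in>M" unfolding M'_def by blast
    then show "(c *\<^sub>R y, c * b) \<in> M'" using inM'[OF scl, of x a c "c*t"]
      by (simp add: algebra_simps)
  next
    fix y b assume "(y,b) \<in> M'" then show "b \<le> norm y" by (rule domM')
  qed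
  moreover have "M \<subseteq> M'" unfolding M'_def by force
  moreover have "(z, r) \<in> M'" using inM'[OF ne, of 1] by simp
  ultimately show ?thesis using z by blast
qed

lemma hahn_banach_norming:
  fixes x0 :: "'x::real_normed_vector"
  assumes x0: "x0 \<noteq> 0"
  shows "\<exists>\<phi>. (\<forall>x y. \<phi> (x + y) = \<phi> x + \<phi> y) \<and> (\<forall>c x. \<phi> (c *\<^sub>R x) = c * \<phi> x) \<and>
    (\<forall>x. \<bar>\<phi> x\<bar> \<le> norm x) \<and> \<phi> x0 = norm x0"
proof -
  define G0 where "G0 = {(c *\<^sub>R x0, c * norm x0) | c. True}"
  have hG0: "hbg G0" unfolding hbg_def G0_def
  proof (intro conjI allI impI)
    fix x a b assume "(x, a) \<in> {(c *\<^sub>R x0, c * norm x0) |c. True}" "(x, b) \<in> {(c *\<^sub>R x0, c * norm x0) |c. True}"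
    then obtain c c' where "x = c *\<^sub>R x0" "a = c * norm x0" "x = c' *\<^sub>R x0" "b = c' * norm x0" by blast
    then show "a = b" using x0 by (metis scaleR_cancel_right)
  next
    fix x a y b assume "(x, a) \<in> {(c *\<^sub>R x0, c * norm x0) |c. True}" "(y, b) \<in> {(c *\<^sub>R x0, c * norm x0) |c. True}"
    then obtain c c' where "x = c *\<^sub>R x0" "a = c * norm x0" "y = c' *\<^sub>R x0" "b = c' * norm x0" by blast
    then show "(x + y, a + b) \<in> {(c *\<^sub>R x0, c * norm x0) |c. True}"
      by (intro CollectI exI[of _ "c+c'"]) (auto simp: algebra_simps)
  next
    fix x a c assume "(x, a) \<in> {(c *\<^sub>R x0, c * norm x0) |c. True}"
    then obtain c' where "x = c' *\<^sub>R x0" "a = c' * norm x0" by blast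
    then show "(c *\<^sub>R x, c * a) \<in> {(c *\<^sub>R x0, c * norm x0) |c. True}"
      by (intro CollectI exI[of _ "c*c'"]) (auto simp: algebra_simps)
  next
    fix x a assume "(x, a) \<in> {(c *\<^sub>R x0, c * norm x0) |c. True}"
    then obtain c' where "x = c' *\<^sub>R x0" "a = c' * norm x0" by blast
    then show "a \<le> norm x" by (simp add: mult_right_mono)
  qed
  define A where "A = {G. hbg G \<and> G0 \<subseteq> G}"
  have "\<forall>C\<in>chains A. \<exists>U\<in>A. \<forall>X\<in>C. X \<subseteq> U"
  proof
    fix C assume C: "C \<in> chains A"
    show "\<exists>U\<in>A. \<forall>X\<in>C. X \<subseteq> U"
    proof (cases "C = {}")
      case True then show ?thesis using hG0 A_def by auto
    next
      case False
      then have "hbg (\<Union>C)" using hbg_chain C A_def by blast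
      moreover have "G0 \<subseteq> \<Union>C" using False C unfolding A_def chains_def by blast
      ultimately show ?thesis unfolding A_def by blast
    qed
  qed
  then obtain M where MA: "M \<in> A" and Mmax: "\<forall>X\<in>A. M \<subseteq> X \<longrightarrow> X = M" using Zorn_Lemma2 by blast
  have hM: "hbg M" and G0M: "G0 \<subseteq> M" using MA A_def by auto
  have zero: "(0,0) \<in> M" using G0M unfolding G0_def by force
  have total: "\<exists>a. (z,a) \<in> M" for z
  proof (rule ccontr)
    assume "\<nexists>a. (z, a) \<in> M"
    then obtain M' where "hbg M'" "M \<subset> M'" using hbg_extend[OF hM _ zero] by blast
    then show False using Mmax G0M A_def by blast
  qed
  define \<phi> where "\<phi> z = (THE a. (z,a) \<in> M)" for z
  have phi: "(z, \<phi> z) \<in> M" for z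
  proof -
    obtain a where "(z,a)\<in>M" using total by blast
    then show ?thesis unfolding \<phi>_def using hM unfolding hbg_def by (metis theI)
  qed
  have eq: "(z,a) \<in> M \<Longrightarrow> \<phi> z = a" for z a using phi[of z] hM unfolding hbg_def by blast
  show ?thesis
  proof (intro exI conjI allI)
    fix x y show "\<phi> (x + y) = \<phi> x + \<phi> y" using hM phi eq unfolding hbg_def by blast
  next
    fix c x show "\<phi> (c *\<^sub>R x) = c * \<phi> x" using hM phi eq unfolding hbg_def by blast
  next
    fix x
    have "\<phi> x \<le> norm x" using hM phi unfolding hbg_def by blast
    moreover have "(-1) * \<phi> x \<le> norm ((-1) *\<^sub>R x)" using hM phi unfolding hbg_def by blast
    ultimately show "\<bar>\<phi> x\<bar> \<le> norm x" by simp
  next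
    have "(1 *\<^sub>R x0, 1 * norm x0) \<in> M" using G0M unfolding G0_def by blast
    then show "\<phi> x0 = norm x0" using eq by simp
  qed
qed

definition dlt :: "'m \<Rightarrow> ('m \<Rightarrow> real) \<Rightarrow> real" where "dlt t = (\<lambda>f. f t)"
definition lin :: "nat \<Rightarrow> (nat \<Rightarrow> real) \<Rightarrow> (nat \<Rightarrow> 'm) \<Rightarrow> ('m \<Rightarrow> real) \<Rightarrow> real" where
  "lin n a p = (\<lambda>f. \<Sum>i<n. a i * f (p i))"

lemma small_zero:
  fixes z C :: real
  assumes "\<And>e. e > 0 \<Longrightarrow> \<bar>z\<bar> \<le> C * e" and "C \<ge> 0"
  shows "z = 0"
proof (rule ccontr)
  assume nz: "z \<noteq> 0"
  define e where "e = \<bar>z\<bar> / (2 * (C + 1))"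
  have e: "e > 0" using nz assms(2) by (simp add: e_def)
  have "C * e < \<bar>z\<bar>"
  proof -
    have "C * e \<le> (C + 1) * e" using e by simp
    also have "\<dots> = \<bar>z\<bar> / 2"
    proof -
      have "C + 1 > 0" using assms(2) by simp
      then show ?thesis unfolding e_def by (simp add: field_simps)
    qed
    finally show ?thesis using nz by simp
  qed
  then show False using assms(1)[OF e] by simp
qed

lemma ball_iff: "f \<in> lip0_ball p0 \<longleftrightarrow> f p0 = 0 \<and> (\<forall>s t. \<bar>f s - f t\<bar> \<le> dist s t)"
  unfolding lip0_ball_def lipschitz_on_def by (auto simp: dist_real_def)

lemma ball_bound: "f \<in> lip0_ball p0 \<Longrightarrow> \<bar>f t\<bar> \<le> dist t p0"
  unfolding ball_iff by (metis diff_zero)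

lemma ball_zero: "(\<lambda>t. 0) \<in> lip0_ball p0"
  unfolding ball_iff by simp

lemma ball_scale:
  assumes "g p0 = 0" "\<And>s t. \<bar>g s - g t\<bar> \<le> M * dist s t" "0 \<le> M" "M \<le> c" "0 < c"
  shows "(\<lambda>t. g t / c) \<in> lip0_ball p0"
  unfolding ball_iff
proof (intro conjI allI)
  show "g p0 / c = 0" using assms by simp
  fix s t
  have "\<bar>g s / c - g t / c\<bar> = \<bar>g s - g t\<bar> / c" using assms(5) by (simp add: diff_divide_distrib[symmetric])
  also have "\<dots> \<le> M * dist s t / c" using assms(2,5) by (simp add: divide_right_mono)
  also have "\<dots> \<le> dist s t"
  proof -
    have "M * dist s t \<le> c * dist s t" using assms(4) by (simp add: mult_right_mono)
    then show ?thesis using assms(5) by (simp add: divide_le_eq mult.commute)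
  qed
  finally show "\<bar>g s / c - g t / c\<bar> \<le> dist s t" .
qed

lemma lin_Suc: "lin (Suc n) a p = (\<lambda>f. 1 * lin n a p f + a n * dlt (p n) f)"
  unfolding lin_def dlt_def by simp

lemma fs_lin: "lin n a p \<in> free_space p0"
  unfolding free_space_def lin_def by (intro CollectI allI impI) (rule exI[of _ n], rule exI[of _ a], rule exI[of _ p], simp)

lemma fs_dlt: "dlt t \<in> free_space p0"
proof -
  have "dlt t = lin 1 (\<lambda>_. 1) (\<lambda>_. t)" unfolding dlt_def lin_def by simp
  then show ?thesis using fs_lin by metis
qed

lemma sum_split_nat:
  fixes h :: "nat \<Rightarrow> real"
  shows "(\<Sum>i<n1 + n2. h i) = (\<Sum>i<n1. h i) + (\<Sum>i<n2. h (n1 + i))"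
  by (induction n2) auto

lemma fs_approx:
  assumes "mu \<in> free_space p0" "e > 0"
  obtains n a p where "\<forall>f\<in>lip0_ball p0. \<bar>mu f - lin n a p f\<bar> \<le> e"
  using assms unfolding free_space_def lin_def by blast

lemma fs_comb:
  assumes mu: "mu \<in> free_space p0" and nu: "nu \<in> free_space p0"
  shows "(\<lambda>f. a * mu f + b * nu f) \<in> free_space p0"
  unfolding free_space_def
proof (intro CollectI allI impI)
  fix e :: real assume e: "e > 0"
  define e' where "e' = e / (\<bar>a\<bar> + \<bar>b\<bar> + 1)"
  have e': "e' > 0" using e by (simp add: e'_def add_nonneg_pos)
  obtain n1 a1 p1 where h1: "\<forall>f\<in>lip0_ball p0. \<bar>mu f - lin n1 a1 p1 f\<bar> \<le> e'" using fs_approx[OF mu e'] by blast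
  obtain n2 a2 p2 where h2: "\<forall>f\<in>lip0_ball p0. \<bar>nu f - lin n2 a2 p2 f\<bar> \<le> e'" using fs_approx[OF nu e'] by blast
  define A where "A i = (if i < n1 then a * a1 i else b * a2 (i - n1))" for i
  define P where "P i = (if i < n1 then p1 i else p2 (i - n1))" for i
  have split: "(\<Sum>i<n1+n2. A i * f (P i)) = a * lin n1 a1 p1 f + b * lin n2 a2 p2 f" for f
    unfolding sum_split_nat lin_def A_def P_def by (simp add: sum_distrib_left mult.assoc)
  have H: "\<forall>f\<in>lip0_ball p0. \<bar>a * mu f + b * nu f - (\<Sum>i<n1+n2. A i * f (P i))\<bar> \<le> e"
    proof (intro ballI)
      fix f assume f: "f \<in> lip0_ball p0"
      have "\<bar>a * mu f + b * nu f - (\<Sum>i<n1+n2. A i * f (P i))\<bar> = \<bar>a * (mu f - lin n1 a1 p1 f) + b * (nu f - lin n2 a2 p2 f)\<bar>"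
        unfolding split by (simp add: algebra_simps)
      also have "\<dots> \<le> \<bar>a\<bar> * \<bar>mu f - lin n1 a1 p1 f\<bar> + \<bar>b\<bar> * \<bar>nu f - lin n2 a2 p2 f\<bar>"
        by (metis abs_mult abs_triangle_ineq)
      also have "\<dots> \<le> \<bar>a\<bar> * e' + \<bar>b\<bar> * e'" using h1 h2 f by (intro add_mono mult_left_mono) auto
      also have "\<dots> \<le> e"
      proof -
        define s where "s = \<bar>a\<bar> + \<bar>b\<bar>"
        have s: "s \<ge> 0" unfolding s_def by simp
        have "\<bar>a\<bar> * e' + \<bar>b\<bar> * e' = s * e / (s + 1)" unfolding s_def e'_def by (simp add: algebra_simps add_divide_distrib)
        also have "\<dots> \<le> e" using s e by (simp add: pos_divide_le_eq)
        finally show ?thesis .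
      qed
      finally show "\<bar>a * mu f + b * nu f - (\<Sum>i<n1+n2. A i * f (P i))\<bar> \<le> e" .
    qed
  show "\<exists>(n::nat) c q. \<forall>f\<in>lip0_ball p0. \<bar>a * mu f + b * nu f - (\<Sum>i<n. c i * f (q i))\<bar> \<le> e" by (rule exI[of _ "n1+n2"], rule exI[of _ A], rule exI[of _ P], rule H)
qed

lemma tri3:
  fixes x y z a b :: real
  shows "\<bar>x - a * y - b * z\<bar> \<le> \<bar>x\<bar> + \<bar>a\<bar> * \<bar>y\<bar> + \<bar>b\<bar> * \<bar>z\<bar>"
proof -
  have "\<bar>x - a * y - b * z\<bar> \<le> \<bar>x\<bar> + \<bar>a * y\<bar> + \<bar>b * z\<bar>" by arith
  then show ?thesis by (simp add: abs_mult)
qed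

lemma fs_bounded:
  assumes "mu \<in> free_space p0"
  shows "\<exists>C. \<forall>f\<in>lip0_ball p0. \<bar>mu f\<bar> \<le> C"
proof -
  obtain n a p where h: "\<forall>f\<in>lip0_ball p0. \<bar>mu f - lin n a p f\<bar> \<le> 1"
    using fs_approx[OF assms, of 1] by auto
  have "\<bar>mu f\<bar> \<le> 1 + (\<Sum>i<n. \<bar>a i\<bar> * dist (p i) p0)" if f: "f \<in> lip0_ball p0" for f
  proof -
    have "\<bar>lin n a p f\<bar> \<le> (\<Sum>i<n. \<bar>a i * f (p i)\<bar>)" unfolding lin_def by (rule sum_abs)
    also have "\<dots> \<le> (\<Sum>i<n. \<bar>a i\<bar> * dist (p i) p0)"
      by (intro sum_mono) (simp add: abs_mult mult_left_mono ball_bound[OF f])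
    finally show ?thesis using h f by force
  qed
  then show ?thesis by blast
qed

lemma lipdual_set_bdd:
  assumes "mu \<in> free_space p0"
  shows "bdd_above {\<bar>mu f\<bar> | f. f \<in> lip0_ball p0}"
  using fs_bounded[OF assms] unfolding bdd_above_def by blast

lemma lipdual_ge:
  assumes "mu \<in> free_space p0" "f \<in> lip0_ball p0"
  shows "\<bar>mu f\<bar> \<le> lipdual_norm p0 mu"
  unfolding lipdual_norm_def by (rule cSup_upper[OF _ lipdual_set_bdd[OF assms(1)]]) (use assms(2) in blast)

lemma lipdual_nonneg:
  assumes "mu \<in> free_space p0"
  shows "0 \<le> lipdual_norm p0 mu"
  using lipdual_ge[OF assms ball_zero] by simp

lemma lipdual_le:
  assumes "\<And>f. f \<in> lip0_ball p0 \<Longrightarrow> \<bar>mu f\<bar> \<le> c"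
  shows "lipdual_norm p0 mu \<le> c"
  unfolding lipdual_norm_def by (rule cSup_least) (use ball_zero assms in auto)

lemma fs_lin_ball:
  assumes mu: "mu \<in> free_space p0" and f: "f \<in> lip0_ball p0" and g: "g \<in> lip0_ball p0"
    and fg: "(\<lambda>t. a * f t + b * g t) \<in> lip0_ball p0"
  shows "mu (\<lambda>t. a * f t + b * g t) = a * mu f + b * mu g"
proof -
  have "mu (\<lambda>t. a * f t + b * g t) - (a * mu f + b * mu g) = 0"
  proof (rule small_zero)
    fix e :: real assume e: "e > 0"
    obtain n c p where h: "\<forall>f\<in>lip0_ball p0. \<bar>mu f - lin n c p f\<bar> \<le> e" using fs_approx[OF mu e] by blast
    have l: "lin n c p (\<lambda>t. a * f t + b * g t) = a * lin n c p f + b * lin n c p g"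
      unfolding lin_def by (simp add: algebra_simps sum.distrib sum_distrib_left)
    have "\<bar>mu (\<lambda>t. a * f t + b * g t) - (a * mu f + b * mu g)\<bar>
       = \<bar>(mu (\<lambda>t. a * f t + b * g t) - lin n c p (\<lambda>t. a * f t + b * g t))
          - a * (mu f - lin n c p f) - b * (mu g - lin n c p g)\<bar>" unfolding l by (simp add: algebra_simps)
    also have "\<dots> \<le> \<bar>mu (\<lambda>t. a * f t + b * g t) - lin n c p (\<lambda>t. a * f t + b * g t)\<bar>
          + \<bar>a\<bar> * \<bar>mu f - lin n c p f\<bar> + \<bar>b\<bar> * \<bar>mu g - lin n c p g\<bar>"
      using tri3 by blast
    also have "\<dots> \<le> e + \<bar>a\<bar> * e + \<bar>b\<bar> * e"
      using h f g fg by (intro add_mono mult_left_mono) auto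
    also have "\<dots> = (1 + \<bar>a\<bar> + \<bar>b\<bar>) * e" by (simp add: algebra_simps)
    finally show "\<bar>mu (\<lambda>t. a * f t + b * g t) - (a * mu f + b * mu g)\<bar> \<le> (1 + \<bar>a\<bar> + \<bar>b\<bar>) * e" .
  qed simp
  then show ?thesis by simp
qed

lemma fs_zero:
  assumes mu: "mu \<in> free_space p0"
  shows "mu (\<lambda>t. 0) = 0"
  using fs_lin_ball[OF mu ball_zero[of p0] ball_zero[of p0], of 0 0] ball_zero[of p0] by simp

lemma ext_comb:
  assumes mu: "mu \<in> free_space p0" and c: "c1 > 0" "c2 > 0" "c3 > 0"
    and f: "(\<lambda>t. f t / c1) \<in> lip0_ball p0" and g: "(\<lambda>t. g t / c2) \<in> lip0_ball p0"
    and fg: "(\<lambda>t. (\<alpha> * f t + \<beta> * g t) / c3) \<in> lip0_ball p0"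
  shows "c3 * mu (\<lambda>t. (\<alpha> * f t + \<beta> * g t) / c3) = \<alpha> * (c1 * mu (\<lambda>t. f t / c1)) + \<beta> * (c2 * mu (\<lambda>t. g t / c2))"
proof -
  define a where "a = \<alpha> * c1 / c3"
  define b where "b = \<beta> * c2 / c3"
  have eq: "(\<lambda>t. (\<alpha> * f t + \<beta> * g t) / c3) = (\<lambda>t. a * (f t / c1) + b * (g t / c2))"
  proof
    fix t
    have "a * (f t / c1) = \<alpha> * f t / c3" using c unfolding a_def by simp
    moreover have "b * (g t / c2) = \<beta> * g t / c3" using c unfolding b_def by simp
    ultimately show "(\<alpha> * f t + \<beta> * g t) / c3 = a * (f t / c1) + b * (g t / c2)" by (simp add: add_divide_distrib)
  qed
  have L: "mu (\<lambda>t. (\<alpha> * f t + \<beta> * g t) / c3) = a * mu (\<lambda>t. f t / c1) + b * mu (\<lambda>t. g t / c2)"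
    unfolding eq by (rule fs_lin_ball[OF mu f g]) (use fg eq in simp)
  have m1: "c3 * (a * mu (\<lambda>t. f t / c1)) = \<alpha> * (c1 * mu (\<lambda>t. f t / c1))" using c unfolding a_def by simp
  have m2: "c3 * (b * mu (\<lambda>t. g t / c2)) = \<beta> * (c2 * mu (\<lambda>t. g t / c2))" using c unfolding b_def by simp
  show ?thesis unfolding L distrib_left m1 m2 ..
qed

lemma D_props:
  assumes "B \<in> ptensor_dual p0"
  shows D_addx: "mu \<in> free_space p0 \<Longrightarrow> B mu (x + y) = B mu x + B mu y"
    and D_scalex: "mu \<in> free_space p0 \<Longrightarrow> B mu (c *\<^sub>R x) = c * B mu x"
    and D_addmu: "mu \<in> free_space p0 \<Longrightarrow> nu \<in> free_space p0 \<Longrightarrow> B (\<lambda>f. mu f + nu f) x = B mu x + B nu x"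
    and D_scalemu: "mu \<in> free_space p0 \<Longrightarrow> B (\<lambda>f. c * mu f) x = c * B mu x"
    and D_bound: "\<exists>K. \<forall>mu\<in>free_space p0. \<forall>x. \<bar>B mu x\<bar> \<le> K * lipdual_norm p0 mu * norm x"
  using assms unfolding ptensor_dual_def by blast+

lemma fs_scale: assumes "mu \<in> free_space p0" shows "(\<lambda>f. c * mu f) \<in> free_space p0"
  using fs_comb[OF assms assms, of c 0] by simp

lemma D_lin_mu:
  assumes B: "B \<in> ptensor_dual p0" and mu: "mu \<in> free_space p0" and nu: "nu \<in> free_space p0"
  shows "B (\<lambda>f. a * mu f + b * nu f) x = a * B mu x + b * B nu x"
proof -
  have "B (\<lambda>f. (\<lambda>f. a * mu f) f + (\<lambda>f. b * nu f) f) x = B (\<lambda>f. a * mu f) x + B (\<lambda>f. b * nu f) x"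
    by (rule D_addmu[OF B fs_scale[OF mu] fs_scale[OF nu]])
  then show ?thesis using D_scalemu[OF B mu] D_scalemu[OF B nu] by simp
qed

lemma D_zero_x:
  assumes B: "B \<in> ptensor_dual p0" and mu: "mu \<in> free_space p0"
  shows "B mu 0 = 0"
  using D_scalex[OF B mu, of 0 0] by simp

lemma D_lin:
  assumes B: "B \<in> ptensor_dual p0"
  shows "B (lin n a p) x = (\<Sum>i<n. a i * B (dlt (p i)) x)"
proof (induction n)
  case 0
  have "lin 0 a p = (\<lambda>f. 0 * dlt p0 f)" unfolding lin_def dlt_def by simp
  then show ?case using D_scalemu[OF B fs_dlt[of p0 p0], where c=0 and x=x] by simp
next
  case (Suc n)
  show ?case unfolding lin_Suc D_lin_mu[OF B fs_lin fs_dlt] Suc by simp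
qed

lemma lipdual_dlt0: "lipdual_norm p0 (dlt p0) = 0"
proof -
  have "lipdual_norm p0 (dlt p0) \<le> 0" by (rule lipdual_le) (simp add: dlt_def ball_iff)
  then show ?thesis using lipdual_nonneg[OF fs_dlt] by (meson antisym)
qed

lemma D_p0:
  assumes B: "B \<in> ptensor_dual p0"
  shows "B (dlt p0) x = 0"
proof -
  obtain K where K: "\<forall>mu\<in>free_space p0. \<forall>x. \<bar>B mu x\<bar> \<le> K * lipdual_norm p0 mu * norm x"
    using D_bound[OF B] by blast
  show ?thesis using K fs_dlt[of p0 p0] lipdual_dlt0[of p0] by force
qed

lemma D_bound_abs:
  assumes B: "B \<in> ptensor_dual p0"
  obtains K where "K \<ge> 0" "\<And>mu x. mu \<in> free_space p0 \<Longrightarrow> \<bar>B mu x\<bar> \<le> K * lipdual_norm p0 mu * norm x"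
proof -
  obtain K where K: "\<forall>mu\<in>free_space p0. \<forall>x. \<bar>B mu x\<bar> \<le> K * lipdual_norm p0 mu * norm x"
    using D_bound[OF B] by blast
  have "\<bar>B mu x\<bar> \<le> \<bar>K\<bar> * lipdual_norm p0 mu * norm x" if "mu \<in> free_space p0" for mu x
  proof -
    have "K * lipdual_norm p0 mu * norm x \<le> \<bar>K\<bar> * lipdual_norm p0 mu * norm x"
      using lipdual_nonneg[OF that] by (intro mult_right_mono) auto
    moreover have "\<bar>B mu x\<bar> \<le> K * lipdual_norm p0 mu * norm x" using K that by blast
    ultimately show ?thesis by linarith
  qed
  then show ?thesis using that[of "\<bar>K\<bar>"] by simp
qed

lemma REP:
  assumes B: "B \<in> ptensor_dual p0" and L: "L > 0"
    and lipB: "\<And>s t. \<bar>B (dlt s) x - B (dlt t) x\<bar> \<le> L * dist s t"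
    and mu: "mu \<in> free_space p0"
  shows "B mu x = L * mu (\<lambda>t. B (dlt t) x / L)"
proof -
  define g where "g t = B (dlt t) x / L" for t
  have g: "g \<in> lip0_ball p0" unfolding g_def
    by (rule ball_scale[of _ _ L]) (use D_p0[OF B] lipB L in auto)
  obtain K where K0: "K \<ge> 0" and K: "\<And>mu x. mu \<in> free_space p0 \<Longrightarrow> \<bar>B mu x\<bar> \<le> K * lipdual_norm p0 mu * norm x"
    using D_bound_abs[OF B] by blast
  have "B mu x - L * mu g = 0"
  proof (rule small_zero)
    fix e :: real assume e: "e > 0"
    obtain n a p where h: "\<forall>f\<in>lip0_ball p0. \<bar>mu f - lin n a p f\<bar> \<le> e" using fs_approx[OF mu e] by blast
    define nu where "nu = (\<lambda>f. 1 * mu f + (-1) * lin n a p f)"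
    have nu: "nu \<in> free_space p0" unfolding nu_def by (rule fs_comb[OF mu fs_lin])
    have nun: "lipdual_norm p0 nu \<le> e" by (rule lipdual_le) (use h in \<open>auto simp: nu_def\<close>)
    have "mu = (\<lambda>f. 1 * lin n a p f + 1 * nu f)" unfolding nu_def by simp
    then have "B mu x = B (lin n a p) x + B nu x" using D_lin_mu[OF B fs_lin nu, of 1 n a p 1 x] by simp
    moreover have "B (lin n a p) x = L * lin n a p g"
      unfolding D_lin[OF B] unfolding lin_def g_def using L by (simp add: sum_distrib_left)
    ultimately have eq: "B mu x - L * mu g = B nu x - L * (mu g - lin n a p g)" by (simp add: algebra_simps)
    have "\<bar>B nu x\<bar> \<le> K * e * norm x"
    proof -
      have "K * lipdual_norm p0 nu * norm x \<le> K * e * norm x"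
        by (intro mult_right_mono mult_left_mono nun K0) simp
      then show ?thesis using K[OF nu, of x] by linarith
    qed
    moreover have "\<bar>L * (mu g - lin n a p g)\<bar> \<le> L * e" using h g L by (simp add: abs_mult)
    ultimately have "\<bar>B mu x - L * mu g\<bar> \<le> K * e * norm x + L * e" unfolding eq by linarith
    then show "\<bar>B mu x - L * mu g\<bar> \<le> (K * norm x + L) * e" by (simp add: algebra_simps)
  qed (use K0 L in simp)
  then show ?thesis unfolding g_def by simp
qed

lemma N_set_bdd:
  assumes B: "B \<in> ptensor_dual p0"
  shows "bdd_above {\<bar>B mu x\<bar> | mu x. mu \<in> free_space p0 \<and> lipdual_norm p0 mu \<le> 1 \<and> norm x \<le> 1}"
proof -
  obtain K where K0: "K \<ge> 0" and K: "\<And>mu x. mu \<in> free_space p0 \<Longrightarrow> \<bar>B mu x\<bar> \<le> K * lipdual_norm p0 mu * norm x"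
    using D_bound_abs[OF B] by blast
  have "\<bar>B mu x\<bar> \<le> K" if "mu \<in> free_space p0" "lipdual_norm p0 mu \<le> 1" "norm x \<le> 1" for mu x
  proof -
    have "K * lipdual_norm p0 mu * norm x \<le> K * 1 * 1"
      using that K0 lipdual_nonneg[OF that(1)] by (intro mult_mono) (auto intro: mult_le_one)
    then show ?thesis using K[OF that(1), of x] by simp
  qed
  then show ?thesis unfolding bdd_above_def by blast
qed

lemma N_ge:
  assumes B: "B \<in> ptensor_dual p0" and "mu \<in> free_space p0" "lipdual_norm p0 mu \<le> 1" "norm x \<le> 1"
  shows "\<bar>B mu x\<bar> \<le> ptensor_dual_norm p0 B"
  unfolding ptensor_dual_norm_def by (rule cSup_upper[OF _ N_set_bdd[OF B]]) (use assms in blast)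

lemma N_nonneg:
  assumes B: "B \<in> ptensor_dual p0"
  shows "0 \<le> ptensor_dual_norm p0 B"
  using N_ge[OF B fs_dlt[of p0 p0], of 0] lipdual_dlt0[of p0] by simp

lemma N_le:
  assumes "\<And>mu x. mu \<in> free_space p0 \<Longrightarrow> lipdual_norm p0 mu \<le> 1 \<Longrightarrow> norm x \<le> 1 \<Longrightarrow> \<bar>B mu x\<bar> \<le> c"
  shows "ptensor_dual_norm p0 B \<le> c"
  unfolding ptensor_dual_norm_def
proof (rule cSup_least)
  show "{\<bar>B mu x\<bar> |mu x. mu \<in> free_space p0 \<and> lipdual_norm p0 mu \<le> 1 \<and> norm x \<le> 1} \<noteq> {}"
    using fs_dlt[of p0 p0] lipdual_dlt0[of p0] by (intro ex_in_conv[THEN iffD1]) (rule exI, rule CollectI, rule exI[of _ "dlt p0"], rule exI[of _ 0], simp)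
qed (use assms in auto)

lemma NB:
  assumes B: "B \<in> ptensor_dual p0" and L: "L > 0"
    and lip: "\<And>s t x. \<bar>B (dlt s) x - B (dlt t) x\<bar> \<le> L * dist s t * norm x"
  shows "ptensor_dual_norm p0 B \<le> L"
proof (rule N_le)
  fix mu and x :: 'b assume mu: "mu \<in> free_space p0" and mun: "lipdual_norm p0 mu \<le> 1" and x: "norm x \<le> 1"
  have lx: "\<bar>B (dlt s) x - B (dlt t) x\<bar> \<le> L * dist s t" for s t
  proof -
    have "L * dist s t * norm x \<le> L * dist s t * 1" using x L by (intro mult_left_mono) auto
    then show ?thesis using lip[of s x t] by simp
  qed
  define g where "g t = B (dlt t) x / L" for t
  have g: "g \<in> lip0_ball p0" unfolding g_def
    by (rule ball_scale[of _ _ L]) (use D_p0[OF B] lx L in auto)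
  have "B mu x = L * mu g" using REP[OF B L lx mu] unfolding g_def .
  also have "\<bar>\<dots>\<bar> \<le> L * 1"
    using lipdual_ge[OF mu g] mun L by (simp add: abs_mult)
  finally show "\<bar>B mu x\<bar> \<le> L" by simp
qed

definition mol :: "'m::metric_space \<Rightarrow> 'm \<Rightarrow> ('m \<Rightarrow> real) \<Rightarrow> real" where
  "mol s t = (\<lambda>f. (1 / dist s t) * dlt s f + (- 1 / dist s t) * dlt t f)"

lemma fs_mol: "mol s t \<in> free_space p0"
  unfolding mol_def by (rule fs_comb[OF fs_dlt fs_dlt])

lemma lipdual_mol: "lipdual_norm p0 (mol s t) \<le> 1"
proof (rule lipdual_le)
  fix f assume f: "f \<in> lip0_ball p0"
  show "\<bar>mol s t f\<bar> \<le> 1"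
  proof (cases "s = t")
    case True then show ?thesis by (simp add: mol_def)
  next
    case False
    then have d: "dist s t > 0" by simp
    have "mol s t f = (f s - f t) / dist s t" unfolding mol_def dlt_def by (simp add: diff_divide_distrib)
    then show ?thesis using f d unfolding ball_iff by (simp add: abs_div)
  qed
qed

lemma D_mol:
  assumes B: "B \<in> ptensor_dual p0"
  shows "B (mol s t) x = (B (dlt s) x - B (dlt t) x) / dist s t"
  unfolding mol_def D_lin_mu[OF B fs_dlt fs_dlt] by (simp add: diff_divide_distrib)

lemma N_lip:
  assumes B: "B \<in> ptensor_dual p0" and N: "ptensor_dual_norm p0 B \<le> 1"
  shows "\<bar>B (dlt s) x - B (dlt t) x\<bar> \<le> dist s t * norm x"
proof (cases "s = t \<or> x = 0")
  case True
  then show ?thesis using D_zero_x[OF B fs_dlt] by auto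
next
  case False
  then have d: "dist s t > 0" and nx: "norm x > 0" by auto
  define x' where "x' = (1 / norm x) *\<^sub>R x"
  have x': "norm x' \<le> 1" unfolding x'_def using nx by simp
  have "\<bar>B (mol s t) x'\<bar> \<le> 1" using N_ge[OF B fs_mol[of s t p0] lipdual_mol[of p0 s t] x'] N by simp
  moreover have "B (mol s t) x' = (B (dlt s) x - B (dlt t) x) / (dist s t * norm x)"
    unfolding D_mol[OF B] x'_def D_scalex[OF B fs_dlt] using d nx by (simp add: field_simps)
  ultimately have "\<bar>B (dlt s) x - B (dlt t) x\<bar> / (dist s t * norm x) \<le> 1" by (simp add: abs_div)
  then show ?thesis using d nx by (simp add: divide_le_eq)
qed

definition SS :: "real \<Rightarrow> ('m \<Rightarrow> 'x::real_normed_vector \<Rightarrow> real) \<Rightarrow> (('m \<Rightarrow> real) \<Rightarrow> real) \<Rightarrow> 'x \<Rightarrow> real" where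
  "SS L G mu x = (L * norm x + 1) * mu (\<lambda>t. G t x / (L * norm x + 1))"

definition lipG :: "'m::metric_space \<Rightarrow> real \<Rightarrow> ('m \<Rightarrow> 'x::real_normed_vector \<Rightarrow> real) \<Rightarrow> bool" where
  "lipG p0 L G \<longleftrightarrow> 0 \<le> L \<and> (\<forall>t x y. G t (x + y) = G t x + G t y) \<and> (\<forall>t c x. G t (c *\<^sub>R x) = c * G t x)
     \<and> (\<forall>x. G p0 x = 0) \<and> (\<forall>s t x. \<bar>G s x - G t x\<bar> \<le> L * dist s t * norm x)"

lemma SS_dlt: "L \<ge> 0 \<Longrightarrow> SS L G (dlt t) x = G t x"
  unfolding SS_def dlt_def
proof -
  assume "L \<ge> 0"
  then have "L * norm x + 1 > 0" by (simp add: add_nonneg_pos)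
  then show "(L * norm x + 1) * (G t x / (L * norm x + 1)) = G t x" by simp
qed

lemma lipG_ball:
  assumes G: "lipG p0 L G" and c: "L * norm x \<le> c" "c > 0"
  shows "(\<lambda>t. G t x / c) \<in> lip0_ball p0"
  by (rule ball_scale[of _ _ "L * norm x"]) (use G c in \<open>auto simp: lipG_def mult.commute mult.left_commute\<close>)

lemma SS_in:
  assumes G: "lipG p0 L G"
  shows "SS L G \<in> ptensor_dual p0"
proof -
  have L: "L \<ge> 0" using G lipG_def by blast
  define C where "C x = L * norm x + 1" for x :: 'b
  have C: "C x > 0" "L * norm x \<le> C x" for x unfolding C_def using L by (auto simp: add_nonneg_pos)
  have addx: "SS L G mu (x + y) = SS L G mu x + SS L G mu y" if mu: "mu \<in> free_space p0" for mu x y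
  proof -
    have e: "(\<lambda>t. G t (x + y) / C (x+y)) = (\<lambda>t. (1 * G t x + 1 * G t y) / C (x+y))" using G unfolding lipG_def by simp
    have "C (x+y) * mu (\<lambda>t. (1 * G t x + 1 * G t y) / C (x+y)) = 1 * (C x * mu (\<lambda>t. G t x / C x)) + 1 * (C y * mu (\<lambda>t. G t y / C y))"
      by (rule ext_comb[OF mu C(1) C(1) C(1) lipG_ball[OF G C(2,1)] lipG_ball[OF G C(2,1)]])
         (use lipG_ball[OF G C(2,1), of "x+y"] e in simp)
    then show ?thesis unfolding SS_def C_def[symmetric] e by simp
  qed
  have scalex: "SS L G mu (c *\<^sub>R x) = c * SS L G mu x" if mu: "mu \<in> free_space p0" for mu c x
  proof -
    have e: "(\<lambda>t. G t (c *\<^sub>R x) / C (c *\<^sub>R x)) = (\<lambda>t. (c * G t x + 0 * G t x) / C (c *\<^sub>R x))" using G unfolding lipG_def by simp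
    have "C (c *\<^sub>R x) * mu (\<lambda>t. (c * G t x + 0 * G t x) / C (c *\<^sub>R x)) = c * (C x * mu (\<lambda>t. G t x / C x)) + 0 * (C x * mu (\<lambda>t. G t x / C x))"
      by (rule ext_comb[OF mu C(1) C(1) C(1) lipG_ball[OF G C(2,1)] lipG_ball[OF G C(2,1)]])
         (use lipG_ball[OF G C(2,1), of "c *\<^sub>R x"] e in simp)
    then show ?thesis unfolding SS_def C_def[symmetric] e by simp
  qed
  have bound: "\<bar>SS L G mu x\<bar> \<le> L * lipdual_norm p0 mu * norm x" if mu: "mu \<in> free_space p0" for mu x
  proof (cases "L * norm x = 0")
    case True
    have "G t x = 0" for t
    proof -
      have "\<bar>G t x - G p0 x\<bar> \<le> L * dist t p0 * norm x" using G unfolding lipG_def by blast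
      moreover have "L * dist t p0 * norm x = dist t p0 * (L * norm x)" by (simp add: algebra_simps)
      moreover have "G p0 x = 0" using G unfolding lipG_def by blast
      ultimately show ?thesis using True by simp
    qed
    then show ?thesis using fs_zero[OF mu] True lipdual_nonneg[OF mu] L unfolding SS_def by auto
  next
    case False
    then have pos: "L * norm x > 0" using L by (simp add: less_le)
    have "SS L G mu x = (L * norm x) * mu (\<lambda>t. G t x / (L * norm x))"
    proof -
      have "C x * mu (\<lambda>t. (1 * G t x + 0 * G t x) / C x) = 1 * ((L * norm x) * mu (\<lambda>t. G t x / (L * norm x))) + 0 * ((L * norm x) * mu (\<lambda>t. G t x / (L * norm x)))"
        by (rule ext_comb[OF mu pos pos C(1) lipG_ball[OF G _ pos] lipG_ball[OF G _ pos]])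
           (use lipG_ball[OF G C(2,1), of x] in simp_all)
      then show ?thesis unfolding SS_def C_def by simp
    qed
    also have "\<bar>\<dots>\<bar> \<le> (L * norm x) * lipdual_norm p0 mu"
    proof -
      have "\<bar>mu (\<lambda>t. G t x / (L * norm x))\<bar> \<le> lipdual_norm p0 mu"
        using lipdual_ge[OF mu lipG_ball[OF G _ pos, of x]] by simp
      then have "(L * norm x) * \<bar>mu (\<lambda>t. G t x / (L * norm x))\<bar> \<le> (L * norm x) * lipdual_norm p0 mu"
        using pos by (intro mult_left_mono) auto
      moreover have "\<bar>(L * norm x) * mu (\<lambda>t. G t x / (L * norm x))\<bar> = (L * norm x) * \<bar>mu (\<lambda>t. G t x / (L * norm x))\<bar>"
        using pos L by (simp add: abs_mult)
      ultimately show ?thesis by simp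
    qed
    finally show ?thesis by (simp add: algebra_simps)
  qed
  show ?thesis unfolding ptensor_dual_def
  proof (intro CollectI conjI ballI allI)
    fix mu nu x assume "mu \<in> free_space p0" "nu \<in> free_space p0"
    show "SS L G (\<lambda>f. mu f + nu f) x = SS L G mu x + SS L G nu x" unfolding SS_def by (simp add: distrib_left)
  next
    fix mu c x assume "mu \<in> free_space p0"
    show "SS L G (\<lambda>f. c * mu f) x = c * SS L G mu x" unfolding SS_def by simp
  next
    show "\<exists>K. \<forall>mu\<in>free_space p0. \<forall>x. \<bar>SS L G mu x\<bar> \<le> K * lipdual_norm p0 mu * norm x"
      using bound by blast
  qed (use addx scalex in auto)
qed

definition psi :: "real \<Rightarrow> real \<Rightarrow> real \<Rightarrow> real" where
  "psi \<delta> \<rho> u = (if u \<le> \<rho> then 0 else min 1 (\<delta> * ln (u / \<rho>)))"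

definition hh :: "real \<Rightarrow> real \<Rightarrow> real" where
  "hh d u = - max 0 (d - u)"

lemma psi_range: "\<delta> > 0 \<Longrightarrow> \<rho> > 0 \<Longrightarrow> 0 \<le> psi \<delta> \<rho> u \<and> psi \<delta> \<rho> u \<le> 1"
  unfolding psi_def by auto

lemma psi_lip:
  assumes d: "\<delta> > 0" and r: "\<rho> > 0" and v: "0 \<le> v" "v \<le> u"
  shows "\<bar>psi \<delta> \<rho> u - psi \<delta> \<rho> v\<bar> * v \<le> \<delta> * (u - v)"
proof (cases "v \<le> \<rho>")
  case True
  show ?thesis
  proof (cases "u \<le> \<rho>")
    case True
    then show ?thesis using \<open>v \<le> \<rho>\<close> d v unfolding psi_def by simp
  next
    case False
    have u: "u > 0" using False r by simp
    have p: "0 \<le> psi \<delta> \<rho> u" "psi \<delta> \<rho> u \<le> \<delta> * ln (u / \<rho>)"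
      using False d r unfolding psi_def by auto
    have "ln (u / \<rho>) \<le> u / \<rho> - 1" using u r by (intro ln_le_minus_one) simp
    then have "\<delta> * ln (u / \<rho>) \<le> \<delta> * (u / \<rho> - 1)" using d by simp
    then have "psi \<delta> \<rho> u * v \<le> \<delta> * (u / \<rho> - 1) * \<rho>"
      using p True v by (meson dual_order.trans mult_mono)
    also have "\<dots> = \<delta> * (u - \<rho>)" using r by (simp add: field_simps)
    also have "\<dots> \<le> \<delta> * (u - v)" using True d by simp
    finally show ?thesis using \<open>v \<le> \<rho>\<close> p unfolding psi_def by simp
  qed
next
  case False
  then have v\<rho>: "v > \<rho>" by simp
  then have u\<rho>: "u > \<rho>" using v by simp
  have vp: "v > 0" using v\<rho> r by simp
  have "\<bar>psi \<delta> \<rho> u - psi \<delta> \<rho> v\<bar> \<le> \<bar>\<delta> * ln (u / \<rho>) - \<delta> * ln (v / \<rho>)\<bar>"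
    using v\<rho> u\<rho> unfolding psi_def by (simp add: min_def)
  also have "\<dots> = \<delta> * ln (u / v)"
  proof -
    have "ln (u / \<rho>) - ln (v / \<rho>) = ln (u / v)" using vp u\<rho> r by (simp add: ln_div)
    moreover have "ln (u / v) \<ge> 0" using vp v by simp
    ultimately show ?thesis using d by (simp add: right_diff_distrib[symmetric] abs_mult)
  qed
  also have "\<dots> \<le> \<delta> * (u / v - 1)" using d vp v by (intro mult_left_mono ln_le_minus_one) auto
  finally have "\<bar>psi \<delta> \<rho> u - psi \<delta> \<rho> v\<bar> * v \<le> \<delta> * (u / v - 1) * v" using vp by (simp add: mult_right_mono)
  also have "\<dots> = \<delta> * (u - v)" using vp by (simp add: field_simps)
  finally show ?thesis .
qed

lemma hh_lip: "\<bar>hh d u - hh d v\<bar> \<le> \<bar>u - v\<bar>"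
  unfolding hh_def by (simp add: max_def)

lemma hh_zero: "d \<le> u \<Longrightarrow> hh d u = 0"
  unfolding hh_def by simp

lemma hh_bound: "0 \<le> u \<Longrightarrow> 0 \<le> d \<Longrightarrow> \<bar>hh d u\<bar> \<le> d"
  unfolding hh_def by (simp add: max_def)

lemma dist_diff_abs: "\<bar>dist s c - dist t c\<bar> \<le> dist s t"
  by (smt (verit) dist_commute dist_triangle)

context
  fixes p0 :: "'m::metric_space" and G :: "'m \<Rightarrow> 'x::real_normed_vector \<Rightarrow> real" and \<phi> :: "'x \<Rightarrow> real"
    and c :: 'm and \<delta> d :: real
  assumes G: "lipG p0 1 G"
    and \<phi>: "\<forall>x y. \<phi> (x + y) = \<phi> x + \<phi> y" "\<forall>a x. \<phi> (a *\<^sub>R x) = a * \<phi> x" "\<forall>x. \<bar>\<phi> x\<bar> \<le> norm x"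
    and \<delta>: "0 < \<delta>" "\<delta> \<le> 1" and d: "0 < d"
begin

definition "\<rho>0 = 3 * d / \<delta>"
definition "Pf x t = psi \<delta> \<rho>0 (dist t c) * (G t x - G c x)"
definition "Dl t x = (1 - \<delta>) * (psi \<delta> \<rho>0 (dist t c) - 1) * (G t x - G c x) + hh d (dist t c) * \<phi> x"

lemma rho_pos: "\<rho>0 > 0" and rho_ge: "\<rho>0 \<ge> 3 * d"
  using \<delta> d unfolding \<rho>0_def by (auto simp: field_simps)

lemma G_lip: "\<bar>G s x - G t x\<bar> \<le> dist s t * norm x"
  using G unfolding lipG_def by simp

lemma Pf_zero: "dist t c \<le> \<rho>0 \<Longrightarrow> Pf x t = 0"
  unfolding Pf_def psi_def by simp

lemma Pf_lip_aux:
  assumes "dist t c \<le> dist s c"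
  shows "\<bar>Pf x s - Pf x t\<bar> \<le> (1 + \<delta>) * dist s t * norm x"
proof -
  define a where "a = psi \<delta> \<rho>0 (dist s c)"
  define b where "b = psi \<delta> \<rho>0 (dist t c)"
  have a: "0 \<le> a" "a \<le> 1" using psi_range[OF \<delta>(1) rho_pos] a_def by auto
  have eq: "Pf x s - Pf x t = (a - b) * (G t x - G c x) + a * (G s x - G t x)"
    unfolding Pf_def a_def b_def by (simp add: algebra_simps)
  have "\<bar>(a - b) * (G t x - G c x)\<bar> \<le> \<bar>a - b\<bar> * (dist t c * norm x)"
    unfolding abs_mult by (intro mult_left_mono G_lip) simp
  also have "\<dots> = (\<bar>a - b\<bar> * dist t c) * norm x" by simp
  also have "\<dots> \<le> (\<delta> * (dist s c - dist t c)) * norm x"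
    unfolding a_def b_def by (intro mult_right_mono psi_lip[OF \<delta>(1) rho_pos] assms) auto
  also have "\<dots> \<le> (\<delta> * dist s t) * norm x"
    using \<delta> dist_triangle3[of s c t] by (intro mult_right_mono mult_left_mono) (auto simp: dist_commute)
  finally have 1: "\<bar>(a - b) * (G t x - G c x)\<bar> \<le> \<delta> * dist s t * norm x" .
  have "\<bar>a * (G s x - G t x)\<bar> \<le> 1 * (dist s t * norm x)"
    unfolding abs_mult using a by (intro mult_mono G_lip) auto
  then show ?thesis unfolding eq using 1 by (simp add: algebra_simps abs_triangle_ineq[THEN order_trans])
qed

lemma Pf_lip: "\<bar>Pf x s - Pf x t\<bar> \<le> (1 + \<delta>) * dist s t * norm x"
proof (cases "dist t c \<le> dist s c")
  case True then show ?thesis by (rule Pf_lip_aux)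
next
  case False
  then have "\<bar>Pf x t - Pf x s\<bar> \<le> (1 + \<delta>) * dist t s * norm x" by (intro Pf_lip_aux) simp
  then show ?thesis by (simp add: dist_commute abs_minus_commute)
qed

lemma Gn_eq: "(1 - \<delta>) * G t x + Dl t x = (1 - \<delta>) * (G c x + Pf x t) + hh d (dist t c) * \<phi> x"
  unfolding Dl_def Pf_def by (simp add: algebra_simps)

lemma rho_mul: "\<delta> * \<rho>0 = 3 * d"
  using \<delta> unfolding \<rho>0_def by simp

lemma Pf_abs: "\<bar>Pf x t\<bar> \<le> dist t c * norm x"
proof -
  have "\<bar>Pf x t\<bar> \<le> 1 * \<bar>G t x - G c x\<bar>" unfolding Pf_def abs_mult
    using psi_range[OF \<delta>(1) rho_pos] by (intro mult_right_mono) auto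
  then show ?thesis using G_lip[of t x c] by simp
qed

lemma Gn_lip_cross:
  assumes s: "dist s c < d" and t: "dist t c > \<rho>0"
  shows "\<bar>((1 - \<delta>) * G s x + Dl s x) - ((1 - \<delta>) * G t x + Dl t x)\<bar> \<le> dist s t * norm x"
proof -
  have eq: "((1 - \<delta>) * G s x + Dl s x) - ((1 - \<delta>) * G t x + Dl t x) = hh d (dist s c) * \<phi> x - (1 - \<delta>) * Pf x t"
    unfolding Gn_eq using Pf_zero[of s x] hh_zero[of d "dist t c"] s t rho_ge d by (simp add: algebra_simps)
  have h1: "\<bar>hh d (dist s c) * \<phi> x\<bar> \<le> d * norm x"
    unfolding abs_mult using hh_bound[of "dist s c" d] d \<phi>(3) by (intro mult_mono) auto
  have h2: "\<bar>(1 - \<delta>) * Pf x t\<bar> \<le> (1 - \<delta>) * (dist t c * norm x)"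
    unfolding abs_mult using \<delta> Pf_abs[of x t] by (intro mult_mono) auto
  have tri: "dist t c \<le> dist s t + dist s c" using dist_triangle3[of t c s] by (simp add: dist_commute add.commute)
  have D: "dist s t \<ge> \<rho>0 - d" using tri s t by linarith
  have key: "(1 - \<delta>) * (dist s t + d) + d \<le> dist s t"
  proof -
    have "\<delta> * dist s t \<ge> \<delta> * (\<rho>0 - d)" using D \<delta> by (intro mult_left_mono) auto
    then have "\<delta> * dist s t \<ge> 3 * d - \<delta> * d" using rho_mul by (simp add: right_diff_distrib)
    then show ?thesis using d \<delta> by (simp add: algebra_simps)
  qed
  have "\<bar>hh d (dist s c) * \<phi> x - (1 - \<delta>) * Pf x t\<bar> \<le> d * norm x + (1 - \<delta>) * (dist t c * norm x)"
    using h1 h2 by linarith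
  also have "\<dots> \<le> d * norm x + (1 - \<delta>) * ((dist s t + d) * norm x)"
    using tri s \<delta> by (intro add_left_mono mult_left_mono mult_right_mono) auto
  also have "\<dots> = ((1 - \<delta>) * (dist s t + d) + d) * norm x" by (simp add: algebra_simps)
  also have "\<dots> \<le> dist s t * norm x" using key by (intro mult_right_mono) auto
  finally show ?thesis unfolding eq .
qed

lemma Gn_lip: "\<bar>((1 - \<delta>) * G s x + Dl s x) - ((1 - \<delta>) * G t x + Dl t x)\<bar> \<le> dist s t * norm x"
proof -
  have eq: "((1 - \<delta>) * G s x + Dl s x) - ((1 - \<delta>) * G t x + Dl t x)
      = (1 - \<delta>) * (Pf x s - Pf x t) + (hh d (dist s c) - hh d (dist t c)) * \<phi> x"
    unfolding Gn_eq by (simp add: algebra_simps)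
  consider "d \<le> dist s c \<and> d \<le> dist t c" | "dist s c \<le> \<rho>0 \<and> dist t c \<le> \<rho>0"
    | "dist s c < d \<and> dist t c > \<rho>0" | "dist t c < d \<and> dist s c > \<rho>0"
    using rho_ge d by fastforce
  then show ?thesis
  proof cases
    case 1
    then have "((1 - \<delta>) * G s x + Dl s x) - ((1 - \<delta>) * G t x + Dl t x) = (1 - \<delta>) * (Pf x s - Pf x t)"
      unfolding eq using hh_zero by simp
    moreover have "\<bar>(1 - \<delta>) * (Pf x s - Pf x t)\<bar> \<le> (1 - \<delta>) * ((1 + \<delta>) * dist s t * norm x)"
      unfolding abs_mult using \<delta> Pf_lip[of x s t] by (intro mult_mono) auto
    moreover have "(1 - \<delta>) * ((1 + \<delta>) * dist s t * norm x) \<le> dist s t * norm x"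
    proof -
      have "(1 - \<delta>) * (1 + \<delta>) \<le> 1" by (simp add: algebra_simps)
      then have "((1 - \<delta>) * (1 + \<delta>)) * (dist s t * norm x) \<le> 1 * (dist s t * norm x)"
        by (intro mult_right_mono) auto
      then show ?thesis by (simp add: algebra_simps)
    qed
    ultimately show ?thesis by linarith
  next
    case 2
    then have "((1 - \<delta>) * G s x + Dl s x) - ((1 - \<delta>) * G t x + Dl t x) = (hh d (dist s c) - hh d (dist t c)) * \<phi> x"
      unfolding eq using Pf_zero by simp
    moreover have "\<bar>(hh d (dist s c) - hh d (dist t c)) * \<phi> x\<bar> \<le> dist s t * norm x"
    proof -
      have "\<bar>hh d (dist s c) - hh d (dist t c)\<bar> \<le> dist s t"
        using hh_lip[of d "dist s c" "dist t c"] dist_diff_abs[of s c t] by linarith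
      then show ?thesis unfolding abs_mult using \<phi>(3) by (intro mult_mono) auto
    qed
    ultimately show ?thesis by simp
  next
    case 3 then show ?thesis using Gn_lip_cross by blast
  next
    case 4
    then have "\<bar>((1 - \<delta>) * G t x + Dl t x) - ((1 - \<delta>) * G s x + Dl s x)\<bar> \<le> dist t s * norm x"
      using Gn_lip_cross by blast
    then show ?thesis by (simp add: dist_commute abs_minus_commute)
  qed
qed

lemma Dl_lip: "\<bar>Dl s x - Dl t x\<bar> \<le> 4 * dist s t * norm x"
proof -
  have eq: "Dl s x - Dl t x = (1 - \<delta>) * ((Pf x s - Pf x t) - (G s x - G t x)) + (hh d (dist s c) - hh d (dist t c)) * \<phi> x"
    unfolding Dl_def Pf_def by (simp add: algebra_simps)
  have a: "\<bar>(Pf x s - Pf x t) - (G s x - G t x)\<bar> \<le> 3 * dist s t * norm x"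
  proof -
    have "(1 + \<delta>) * dist s t * norm x \<le> 2 * dist s t * norm x" using \<delta> by (intro mult_right_mono) auto
    then show ?thesis using Pf_lip[of x s t] G_lip[of s x t] by linarith
  qed
  have b: "\<bar>(1 - \<delta>) * ((Pf x s - Pf x t) - (G s x - G t x))\<bar> \<le> 1 * (3 * dist s t * norm x)"
    unfolding abs_mult using \<delta> a by (intro mult_mono) auto
  have c: "\<bar>(hh d (dist s c) - hh d (dist t c)) * \<phi> x\<bar> \<le> dist s t * norm x"
  proof -
    have "\<bar>hh d (dist s c) - hh d (dist t c)\<bar> \<le> dist s t"
      using hh_lip[of d "dist s c" "dist t c"] dist_diff_abs[of s c t] by linarith
    then show ?thesis unfolding abs_mult using \<phi>(3) by (intro mult_mono) auto
  qed
  show ?thesis unfolding eq using b c by linarith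
qed

lemma Dl_far:
  assumes A: "dist t c \<ge> \<rho>0 * exp (1 / \<delta>)"
  shows "Dl t x = 0"
proof -
  have e1: "1 < exp (1 / \<delta>)" using \<delta> by simp
  have "\<rho>0 * 1 < \<rho>0 * exp (1 / \<delta>)" using e1 rho_pos by (rule mult_strict_left_mono)
  then have gt: "dist t c > \<rho>0" using A by simp
  have q: "exp (1 / \<delta>) \<le> dist t c / \<rho>0" using A rho_pos by (simp add: pos_le_divide_eq mult.commute)
  have "ln (exp (1 / \<delta>)) \<le> ln (dist t c / \<rho>0)"
    using q less_le_trans[OF exp_gt_zero q] by (subst ln_le_cancel_iff) auto
  then have "1 / \<delta> \<le> ln (dist t c / \<rho>0)" by simp
  then have "\<delta> * (1 / \<delta>) \<le> \<delta> * ln (dist t c / \<rho>0)" using \<delta> by (intro mult_left_mono) auto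
  then have "1 \<le> \<delta> * ln (dist t c / \<rho>0)" using \<delta> by simp
  then have "psi \<delta> \<rho>0 (dist t c) = 1" using gt unfolding psi_def by simp
  moreover have "hh d (dist t c) = 0" using gt rho_ge d by (intro hh_zero) simp
  ultimately show ?thesis unfolding Dl_def by simp
qed

lemma Dl_c: "Dl c x = - d * \<phi> x"
  unfolding Dl_def psi_def hh_def using d by simp

lemma Dl_q: "dist q c = d \<Longrightarrow> Dl q x = - (1 - \<delta>) * (G q x - G c x)"
  unfolding Dl_def psi_def hh_def using rho_ge d by simp

lemma Dl_lipG:
  assumes "dist p0 c \<ge> \<rho>0 * exp (1 / \<delta>)"
  shows "lipG p0 4 Dl"
  unfolding lipG_def
proof (intro conjI allI)
  fix t x y show "Dl t (x + y) = Dl t x + Dl t y"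
    using G \<phi> unfolding Dl_def lipG_def by (simp add: algebra_simps)
next
  fix t a x show "Dl t (a *\<^sub>R x) = a * Dl t x"
    using G \<phi> unfolding Dl_def lipG_def by (simp add: algebra_simps)
next
  fix x show "Dl p0 x = 0" using Dl_far[OF assms] .
next
  fix s t x show "\<bar>Dl s x - Dl t x\<bar> \<le> 4 * dist s t * norm x" by (rule Dl_lip)
qed simp

end

lemma V_props:
  assumes "Phi \<in> ptensor_bidual p0"
  shows V_add: "B \<in> ptensor_dual p0 \<Longrightarrow> C \<in> ptensor_dual p0 \<Longrightarrow> Phi (\<lambda>mu x. B mu x + C mu x) = Phi B + Phi C"
    and V_scale: "B \<in> ptensor_dual p0 \<Longrightarrow> Phi (\<lambda>mu x. c * B mu x) = c * Phi B"
    and V_bound: "\<exists>K. \<forall>B\<in>ptensor_dual p0. \<bar>Phi B\<bar> \<le> K * ptensor_dual_norm p0 B"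
  using assms unfolding ptensor_bidual_def by blast+

lemma D_zero: "(\<lambda>mu x. 0) \<in> ptensor_dual p0"
  unfolding ptensor_dual_def by (auto intro!: exI[of _ 0])

lemma D_add:
  assumes "B \<in> ptensor_dual p0" "C \<in> ptensor_dual p0"
  shows "(\<lambda>mu x. B mu x + C mu x) \<in> ptensor_dual p0"
proof -
  obtain K1 where K1: "K1 \<ge> 0" "\<And>mu x. mu \<in> free_space p0 \<Longrightarrow> \<bar>B mu x\<bar> \<le> K1 * lipdual_norm p0 mu * norm x"
    using D_bound_abs[OF assms(1)] by blast
  obtain K2 where K2: "K2 \<ge> 0" "\<And>mu x. mu \<in> free_space p0 \<Longrightarrow> \<bar>C mu x\<bar> \<le> K2 * lipdual_norm p0 mu * norm x"
    using D_bound_abs[OF assms(2)] by blast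
  have "\<bar>B mu x + C mu x\<bar> \<le> (K1 + K2) * lipdual_norm p0 mu * norm x" if "mu \<in> free_space p0" for mu x
    using K1(2)[OF that, of x] K2(2)[OF that, of x] by (simp add: algebra_simps abs_triangle_ineq[THEN order_trans])
  then have "\<exists>K. \<forall>mu\<in>free_space p0. \<forall>x. \<bar>B mu x + C mu x\<bar> \<le> K * lipdual_norm p0 mu * norm x" by blast
  then show ?thesis using assms unfolding ptensor_dual_def by (auto simp: algebra_simps)
qed

lemma D_scale:
  assumes "B \<in> ptensor_dual p0"
  shows "(\<lambda>mu x. c * B mu x) \<in> ptensor_dual p0"
proof -
  obtain K1 where K1: "K1 \<ge> 0" "\<And>mu x. mu \<in> free_space p0 \<Longrightarrow> \<bar>B mu x\<bar> \<le> K1 * lipdual_norm p0 mu * norm x"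
    using D_bound_abs[OF assms(1)] by blast
  have "\<bar>c * B mu x\<bar> \<le> (\<bar>c\<bar> * K1) * lipdual_norm p0 mu * norm x" if "mu \<in> free_space p0" for mu x
    using K1(2)[OF that, of x] by (simp add: abs_mult mult_left_mono mult.assoc)
  then have "\<exists>K. \<forall>mu\<in>free_space p0. \<forall>x. \<bar>c * B mu x\<bar> \<le> K * lipdual_norm p0 mu * norm x" by blast
  then show ?thesis using assms unfolding ptensor_dual_def by (auto simp: algebra_simps)
qed

lemma D_sum:
  assumes "finite F" "\<And>k. k \<in> F \<Longrightarrow> Bk k \<in> ptensor_dual p0"
  shows "(\<lambda>mu x. \<Sum>k\<in>F. Bk k mu x) \<in> ptensor_dual p0"
  using assms
proof (induction F rule: finite_induct)
  case empty then show ?case using D_zero by simp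
next
  case (insert a F)
  then show ?case using D_add[of "Bk a" p0 "\<lambda>mu x. \<Sum>k\<in>F. Bk k mu x"] by simp
qed

lemma V_zero:
  assumes "Phi \<in> ptensor_bidual p0"
  shows "Phi (\<lambda>mu x. 0) = 0"
  using V_scale[OF assms D_zero, of 0] by simp

lemma V_sum:
  assumes Phi: "Phi \<in> ptensor_bidual p0" and "finite F" "\<And>k. k \<in> F \<Longrightarrow> Bk k \<in> ptensor_dual p0"
  shows "Phi (\<lambda>mu x. \<Sum>k\<in>F. Bk k mu x) = (\<Sum>k\<in>F. Phi (Bk k))"
  using assms(2,3)
proof (induction F rule: finite_induct)
  case empty then show ?case using V_zero[OF Phi] by simp
next
  case (insert a F)
  have "Phi (\<lambda>mu x. \<Sum>k\<in>insert a F. Bk k mu x) = Phi (\<lambda>mu x. Bk a mu x + (\<Sum>k\<in>F. Bk k mu x))"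
    using insert.hyps by simp
  also have "\<dots> = Phi (Bk a) + Phi (\<lambda>mu x. \<Sum>k\<in>F. Bk k mu x)"
    by (rule V_add[OF Phi]) (use insert.prems D_sum[OF insert.hyps(1), of Bk p0] in auto)
  finally show ?case using insert by simp
qed

lemma NN_set_bdd:
  assumes "\<And>B. B \<in> ptensor_dual p0 \<Longrightarrow> ptensor_dual_norm p0 B \<le> 1 \<Longrightarrow> \<bar>Psi B\<bar> \<le> K"
  shows "bdd_above {\<bar>Psi B\<bar> | B. B \<in> ptensor_dual p0 \<and> ptensor_dual_norm p0 B \<le> 1}"
  using assms unfolding bdd_above_def by blast

lemma V_bdd1:
  assumes "Phi \<in> ptensor_bidual p0"
  obtains K where "\<And>B. B \<in> ptensor_dual p0 \<Longrightarrow> ptensor_dual_norm p0 B \<le> 1 \<Longrightarrow> \<bar>Phi B\<bar> \<le> K"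
proof -
  obtain K where K: "\<forall>B\<in>ptensor_dual p0. \<bar>Phi B\<bar> \<le> K * ptensor_dual_norm p0 B" using V_bound[OF assms] by blast
  have "\<bar>Phi B\<bar> \<le> \<bar>K\<bar>" if "B \<in> ptensor_dual p0" "ptensor_dual_norm p0 B \<le> 1" for B
  proof -
    have n0: "0 \<le> ptensor_dual_norm p0 B" by (rule N_nonneg[OF that(1)])
    have "K * ptensor_dual_norm p0 B \<le> \<bar>K\<bar> * ptensor_dual_norm p0 B"
      using n0 by (intro mult_right_mono) auto
    also have "\<dots> \<le> \<bar>K\<bar> * 1" using that(2) by (intro mult_left_mono) auto
    finally have "K * ptensor_dual_norm p0 B \<le> \<bar>K\<bar> * 1" .
    then show ?thesis using K that(1) by fastforce
  qed
  then show ?thesis using that by blast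
qed

lemma NN_ge:
  assumes "bdd_above {\<bar>Psi B\<bar> | B. B \<in> ptensor_dual p0 \<and> ptensor_dual_norm p0 B \<le> 1}"
    and "B \<in> ptensor_dual p0" "ptensor_dual_norm p0 B \<le> 1"
  shows "\<bar>Psi B\<bar> \<le> ptensor_bidual_norm p0 Psi"
  unfolding ptensor_bidual_norm_def by (rule cSup_upper[OF _ assms(1)]) (use assms in blast)

lemma V_NN_ge:
  assumes "Phi \<in> ptensor_bidual p0" "B \<in> ptensor_dual p0" "ptensor_dual_norm p0 B \<le> 1"
  shows "\<bar>Phi B\<bar> \<le> ptensor_bidual_norm p0 Phi"
proof -
  obtain K where K: "\<And>B. B \<in> ptensor_dual p0 \<Longrightarrow> ptensor_dual_norm p0 B \<le> 1 \<Longrightarrow> \<bar>Phi B\<bar> \<le> K"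
    using V_bdd1[OF assms(1)] by blast
  have bdd: "bdd_above {\<bar>Phi B\<bar> | B. B \<in> ptensor_dual p0 \<and> ptensor_dual_norm p0 B \<le> 1}"
    using K unfolding bdd_above_def by blast
  show ?thesis by (rule NN_ge[OF bdd assms(2,3)])
qed

lemma N_zero: "ptensor_dual_norm p0 (\<lambda>mu x. 0) \<le> 1"
  by (rule N_le) simp

lemma NN_le:
  assumes "\<And>B. B \<in> ptensor_dual p0 \<Longrightarrow> ptensor_dual_norm p0 B \<le> 1 \<Longrightarrow> \<bar>Psi B\<bar> \<le> c"
  shows "ptensor_bidual_norm p0 Psi \<le> c"
  unfolding ptensor_bidual_norm_def
proof (rule cSup_least)
  show "{\<bar>Psi B\<bar> |B. B \<in> ptensor_dual p0 \<and> ptensor_dual_norm p0 B \<le> 1} \<noteq> {}"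
    using D_zero[of p0] N_zero[of p0] by blast
next
  fix v assume "v \<in> {\<bar>Psi B\<bar> |B. B \<in> ptensor_dual p0 \<and> ptensor_dual_norm p0 B \<le> 1}"
  then obtain B where "v = \<bar>Psi B\<bar>" "B \<in> ptensor_dual p0" "ptensor_dual_norm p0 B \<le> 1" by blast
  then show "v \<le> c" using assms by simp
qed

lemma V_near:
  assumes Phi: "Phi \<in> ptensor_bidual p0" and n1: "ptensor_bidual_norm p0 Phi = 1" and e: "e > 0"
  obtains B where "B \<in> ptensor_dual p0" "ptensor_dual_norm p0 B \<le> 1" "Phi B > 1 - e"
proof -
  obtain K where K: "\<And>B. B \<in> ptensor_dual p0 \<Longrightarrow> ptensor_dual_norm p0 B \<le> 1 \<Longrightarrow> \<bar>Phi B\<bar> \<le> K"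
    using V_bdd1[OF Phi] by blast
  have "1 - e < Sup {\<bar>Phi B\<bar> | B. B \<in> ptensor_dual p0 \<and> ptensor_dual_norm p0 B \<le> 1}"
    using n1 e unfolding ptensor_bidual_norm_def by simp
  moreover have ne: "{\<bar>Phi B\<bar> | B. B \<in> ptensor_dual p0 \<and> ptensor_dual_norm p0 B \<le> 1} \<noteq> {}"
    using D_zero[of p0] N_zero[of p0] by blast
  moreover have bdd: "bdd_above {\<bar>Phi B\<bar> | B. B \<in> ptensor_dual p0 \<and> ptensor_dual_norm p0 B \<le> 1}"
    using K unfolding bdd_above_def by blast
  ultimately obtain v where "v \<in> {\<bar>Phi B\<bar> | B. B \<in> ptensor_dual p0 \<and> ptensor_dual_norm p0 B \<le> 1}" "1 - e < v"
    using less_cSup_iff[OF ne bdd] by blast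
  then obtain B where B: "B \<in> ptensor_dual p0" "ptensor_dual_norm p0 B \<le> 1" "1 - e < \<bar>Phi B\<bar>" by blast
  show ?thesis
  proof (cases "Phi B \<ge> 0")
    case True then show ?thesis using that B by simp
  next
    case False
    define B' where "B' = (\<lambda>mu x. (-1) * B mu x)"
    have B'D: "B' \<in> ptensor_dual p0" unfolding B'_def by (rule D_scale[OF B(1)])
    have "ptensor_dual_norm p0 B' \<le> 1"
    proof (rule N_le)
      fix mu and x :: 'b assume "mu \<in> free_space p0" "lipdual_norm p0 mu \<le> 1" "norm x \<le> 1"
      then have "\<bar>B mu x\<bar> \<le> ptensor_dual_norm p0 B" by (rule N_ge[OF B(1)])
      then show "\<bar>B' mu x\<bar> \<le> 1" using B(2) by (simp add: B'_def)
    qed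
    moreover have "Phi B' = - Phi B" unfolding B'_def using V_scale[OF Phi B(1), of "-1"] by simp
    ultimately show ?thesis using that[OF B'D] B False by simp
  qed
qed

lemma card_le1:
  assumes "finite X" "\<And>a b. a \<in> X \<Longrightarrow> b \<in> X \<Longrightarrow> a = b"
  shows "card X \<le> 1"
  using card_le_Suc0_iff_eq[OF assms(1)] assms(2) by auto

lemma disjoint_sum_lip:
  fixes u :: "'m::metric_space \<Rightarrow> 'm \<Rightarrow> real" and a :: "'m \<Rightarrow> real"
  assumes F: "finite F"
    and lip: "\<And>c. c \<in> F \<Longrightarrow> \<bar>u c s - u c t\<bar> \<le> L * dist s t"
    and zero: "\<And>c y. c \<in> F \<Longrightarrow> dist y c \<ge> R \<Longrightarrow> u c y = 0"
    and sep: "\<And>c c'. c \<in> F \<Longrightarrow> c' \<in> F \<Longrightarrow> c \<noteq> c' \<Longrightarrow> 2 * R \<le> dist c c'"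
    and A: "\<And>c. c \<in> F \<Longrightarrow> \<bar>a c\<bar> \<le> A" and A0: "A \<ge> 0" and L0: "L \<ge> 0"
  shows "\<bar>\<Sum>c\<in>F. a c * (u c s - u c t)\<bar> \<le> 2 * A * L * dist s t"
proof -
  define Fs where "Fs = {c\<in>F. dist s c < R}"
  define Ft where "Ft = {c\<in>F. dist t c < R}"
  have one: "card {c\<in>F. dist w c < R} \<le> 1" for w
  proof (rule card_le1)
    show "finite {c\<in>F. dist w c < R}" using F by simp
  next
    fix c c' assume "c \<in> {c\<in>F. dist w c < R}" "c' \<in> {c\<in>F. dist w c < R}"
    then have "c \<in> F" "c' \<in> F" "dist w c < R" "dist w c' < R" by auto
    moreover have "dist c c' \<le> dist w c + dist w c'" by (rule dist_triangle3)
    ultimately show "c = c'" using sep by force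
  qed
  have sub: "Fs \<union> Ft \<subseteq> F" unfolding Fs_def Ft_def by auto
  have fin: "finite (Fs \<union> Ft)" using sub F finite_subset by blast
  have "(\<Sum>c\<in>F. a c * (u c s - u c t)) = (\<Sum>c\<in>Fs \<union> Ft. a c * (u c s - u c t))"
  proof (rule sum.mono_neutral_right[OF F sub])
    show "\<forall>c\<in>F - (Fs \<union> Ft). a c * (u c s - u c t) = 0"
      using zero unfolding Fs_def Ft_def by (auto simp: not_less)
  qed
  also have "\<bar>\<dots>\<bar> \<le> (\<Sum>c\<in>Fs \<union> Ft. \<bar>a c * (u c s - u c t)\<bar>)" by (rule sum_abs)
  also have "\<dots> \<le> (\<Sum>c\<in>Fs \<union> Ft. A * (L * dist s t))"
    using sub A lip A0 by (intro sum_mono) (auto simp: abs_mult intro!: mult_mono)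
  also have "\<dots> = real (card (Fs \<union> Ft)) * (A * (L * dist s t))" by simp
  also have "\<dots> \<le> 2 * (A * (L * dist s t))"
  proof (rule mult_right_mono)
    have "card (Fs \<union> Ft) \<le> card Fs + card Ft" by (rule card_Un_le)
    also have "\<dots> \<le> 2" using one[of s] one[of t] unfolding Fs_def Ft_def by simp
    finally show "real (card (Fs \<union> Ft)) \<le> 2" by simp
  qed (use A0 L0 in simp)
  finally show ?thesis by (simp add: mult.assoc)
qed

lemma avg_exists:
  fixes f :: "'a \<Rightarrow> real"
  assumes "finite F" "F \<noteq> {}" "(\<Sum>c\<in>F. f c) \<le> T"
  shows "\<exists>c\<in>F. f c \<le> T / real (card F)"
proof (rule ccontr)
  assume "\<not> ?thesis"
  then have "\<And>c. c \<in> F \<Longrightarrow> T / real (card F) < f c" by auto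
  then have "(\<Sum>c\<in>F. T / real (card F)) < (\<Sum>c\<in>F. f c)" using assms by (intro sum_strict_mono) auto
  moreover have "(\<Sum>c\<in>F. T / real (card F)) = T" using assms by simp
  ultimately show False using assms by simp
qed

lemma sgn_mul_self: "sgn (a::real) * a = \<bar>a\<bar>"
  by (cases "a > 0"; cases "a < 0") auto

theorem theorem4p4:
  fixes p0 :: "'m::metric_space"
  assumes "infinite {q::'m. q islimpt (UNIV::'m set)}"
    and "\<exists>x::'x::banach. x \<noteq> 0"
  shows "octahedral_fun_space (ptensor_bidual p0 :: (((('m \<Rightarrow> real) \<Rightarrow> real) \<Rightarrow> 'x \<Rightarrow> real) \<Rightarrow> real) set)
           (ptensor_bidual_norm p0)"
proof -
  obtain x1 :: 'x where x1: "x1 \<noteq> 0" using assms(2) by blast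
  define x0 where "x0 = (1 / norm x1) *\<^sub>R x1"
  have nx0: "norm x0 = 1" unfolding x0_def using x1 by simp
  then have x0nz: "x0 \<noteq> 0" by auto
  obtain \<phi> :: "'x \<Rightarrow> real" where \<phi>1: "\<forall>x y. \<phi> (x + y) = \<phi> x + \<phi> y" and \<phi>2: "\<forall>a x. \<phi> (a *\<^sub>R x) = a * \<phi> x"
    and \<phi>3: "\<forall>x. \<bar>\<phi> x\<bar> \<le> norm x" and \<phi>x0: "\<phi> x0 = 1"
    using hahn_banach_norming[OF x0nz] nx0 by metis
  show ?thesis unfolding octahedral_fun_space_def
  proof (intro allI impI)
    fix n :: nat and z :: "nat \<Rightarrow> (((('m \<Rightarrow> real) \<Rightarrow> real) \<Rightarrow> 'x \<Rightarrow> real) \<Rightarrow> real)" and e :: real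
    assume H: "(\<forall>i<n. z i \<in> ptensor_bidual p0 \<and> ptensor_bidual_norm p0 (z i) = 1) \<and> 0 < e"
    then have zV: "\<And>i. i < n \<Longrightarrow> z i \<in> ptensor_bidual p0" and zN: "\<And>i. i < n \<Longrightarrow> ptensor_bidual_norm p0 (z i) = 1"
      and e: "e > 0" by auto
    define \<delta> where "\<delta> = min e 1 / 4"
    have \<delta>0: "0 < \<delta>" and \<delta>1: "\<delta> \<le> 1" and \<delta>e: "3 * \<delta> \<le> e" using e unfolding \<delta>_def by auto
    have "\<forall>i<n. \<exists>B. B \<in> ptensor_dual p0 \<and> ptensor_dual_norm p0 B \<le> 1 \<and> z i B > 1 - \<delta>"
    proof (intro allI impI)
      fix i assume i: "i < n"
      obtain B where "B \<in> ptensor_dual p0" "ptensor_dual_norm p0 B \<le> 1" "z i B > 1 - \<delta>"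
        using V_near[OF zV[OF i] zN[OF i] \<delta>0] by blast
      then show "\<exists>B. B \<in> ptensor_dual p0 \<and> ptensor_dual_norm p0 B \<le> 1 \<and> z i B > 1 - \<delta>" by blast
    qed
    then obtain Bi where Bi: "\<And>i. i < n \<Longrightarrow> Bi i \<in> ptensor_dual p0 \<and> ptensor_dual_norm p0 (Bi i) \<le> 1 \<and> z i (Bi i) > 1 - \<delta>"
      by metis
    define Gi where "Gi i t x = Bi i (dlt t) x" for i t and x :: 'x
    have lipGi: "lipG p0 1 (Gi i)" if i: "i < n" for i
    proof -
      have BD: "Bi i \<in> ptensor_dual p0" and BN: "ptensor_dual_norm p0 (Bi i) \<le> 1" using Bi[OF i] by auto
      show ?thesis unfolding lipG_def Gi_def
        using D_addx[OF BD fs_dlt] D_scalex[OF BD fs_dlt] D_p0[OF BD] N_lip[OF BD BN] by simp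
    qed
    define S where "S = {q::'m. q islimpt (UNIV::'m set)} - {p0}"
    have Sinf: "infinite S" unfolding S_def using assms(1) by simp
    define Nf where "Nf = nat \<lceil>8 * real n / \<delta>\<rceil> + 1"
    obtain F where F: "finite F" "card F = Nf" "F \<subseteq> S" using infinite_arbitrarily_large[OF Sinf] by blast
    have Fne: "F \<noteq> {}" using F Nf_def by auto
    have cardF: "8 * real n / real (card F) \<le> \<delta>"
    proof -
      have "8 * real n / \<delta> \<le> real Nf" unfolding Nf_def by linarith
      then have "8 * real n \<le> \<delta> * real Nf" using \<delta>0 by (simp add: divide_le_eq mult.commute)
      moreover have "real Nf > 0" unfolding Nf_def by simp
      ultimately show ?thesis using F(2) by (simp add: divide_le_eq mult.commute)
    qed
    define Ds where "Ds = (\<lambda>p. dist (fst p) (snd p)) ` {p \<in> F \<times> F. fst p \<noteq> snd p} \<union> (\<lambda>a. dist a p0) ` F \<union> {1}"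
    have Dsfin: "finite Ds" unfolding Ds_def using F(1) by auto
    have Dspos: "\<forall>v\<in>Ds. 0 < v" unfolding Ds_def using F(3) S_def by auto
    define R0 where "R0 = Min Ds / 2"
    have R0: "R0 > 0" unfolding R0_def using Dsfin Dspos by (simp add: Ds_def)
    have sep: "2 * R0 \<le> dist a b" if "a \<in> F" "b \<in> F" "a \<noteq> b" for a b
    proof -
      have "dist a b \<in> Ds" unfolding Ds_def using that by force
      then show ?thesis unfolding R0_def using Dsfin by simp
    qed
    have farp0: "2 * R0 \<le> dist a p0" if "a \<in> F" for a
    proof -
      have "dist a p0 \<in> Ds" unfolding Ds_def using that by force
      then show ?thesis unfolding R0_def using Dsfin by simp
    qed
    define r where "r = R0 * \<delta> / (3 * exp (1 / \<delta>))"
    have r: "r > 0" unfolding r_def using R0 \<delta>0 by simp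
    have "\<forall>c\<in>F. \<exists>q. q \<noteq> c \<and> dist q c < r"
    proof
      fix c assume "c \<in> F"
      then have "c islimpt (UNIV::'m set)" using F(3) S_def by auto
      then show "\<exists>q. q \<noteq> c \<and> dist q c < r" using r unfolding islimpt_approachable by blast
    qed
    then obtain qf where qf: "\<And>c. c \<in> F \<Longrightarrow> qf c \<noteq> c \<and> dist (qf c) c < r" by metis
    define dd where "dd c = dist (qf c) c" for c
    have dd0: "c \<in> F \<Longrightarrow> dd c > 0" for c unfolding dd_def using qf by simp
    have Rsmall: "\<rho>0 \<delta> (dd c) * exp (1 / \<delta>) < R0" if c: "c \<in> F" and i: "i < n" for c i
    proof -
      have "\<rho>0 \<delta> (dd c) * exp (1 / \<delta>) = dd c * (3 * exp (1 / \<delta>) / \<delta>)"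
        unfolding \<rho>0_def[OF lipGi[OF i] \<phi>1 \<phi>2 \<phi>3 \<delta>0 \<delta>1 dd0[OF c]] by simp
      also have "\<dots> < r * (3 * exp (1 / \<delta>) / \<delta>)" using qf[OF c] \<delta>0 unfolding dd_def by (intro mult_strict_right_mono) auto
      also have "\<dots> = R0" unfolding r_def using \<delta>0 by simp
      finally show ?thesis .
    qed
    define Dlt where "Dlt i c = Dl (Gi i) \<phi> c \<delta> (dd c)" for i c
    have ctx: "lipG p0 1 (Gi i)" "\<forall>x y. \<phi> (x + y) = \<phi> x + \<phi> y" "\<forall>a x. \<phi> (a *\<^sub>R x) = a * \<phi> x"
      "\<forall>x. \<bar>\<phi> x\<bar> \<le> norm x" "0 < \<delta>" "\<delta> \<le> 1" if "i < n" for i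
      using lipGi[OF that] \<phi>1 \<phi>2 \<phi>3 \<delta>0 \<delta>1 by auto
    have Dlt_far: "Dlt i c y x = 0" if i: "i < n" and c: "c \<in> F" and y: "dist y c \<ge> R0" for i c y x
      unfolding Dlt_def using Dl_far[OF ctx[OF i] dd0[OF c]] Rsmall[OF c i] y by simp
    have lipD: "lipG p0 4 (Dlt i c)" if i: "i < n" and c: "c \<in> F" for i c
    proof -
      have "\<rho>0 \<delta> (dd c) * exp (1 / \<delta>) \<le> dist p0 c"
        using Rsmall[OF c i] farp0[OF c] R0 by (simp add: dist_commute)
      then show ?thesis unfolding Dlt_def by (rule Dl_lipG[OF ctx[OF i] dd0[OF c]])
    qed
    define H where "H i c = SS 4 (Dlt i c)" for i c
    have HD: "H i c \<in> ptensor_dual p0" if "i < n" "c \<in> F" for i c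
      unfolding H_def by (rule SS_in[OF lipD[OF that]])
    have Hdlt: "H i c (dlt t) x = Dlt i c t x" for i c t x
      unfolding H_def by (rule SS_dlt) simp
    define val where "val i c = \<bar>z i (H i c)\<bar>" for i c
    have sum_c: "(\<Sum>c\<in>F. val i c) \<le> 8" if i: "i < n" for i
    proof -
      define a where "a c = sgn (z i (H i c)) / 8" for c
      define W where "W = (\<lambda>mu x. \<Sum>c\<in>F. a c * H i c mu x)"
      have WD: "W \<in> ptensor_dual p0" unfolding W_def
        by (rule D_sum[OF F(1)]) (rule D_scale[OF HD[OF i]])
      have zW: "z i W = (\<Sum>c\<in>F. val i c) / 8"
      proof -
        have "z i W = (\<Sum>c\<in>F. z i (\<lambda>mu x. a c * H i c mu x))" unfolding W_def
          by (rule V_sum[OF zV[OF i] F(1)]) (rule D_scale[OF HD[OF i]])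
        also have "\<dots> = (\<Sum>c\<in>F. a c * z i (H i c))"
          by (rule sum.cong[OF refl]) (rule V_scale[OF zV[OF i] HD[OF i]])
        also have "\<dots> = (\<Sum>c\<in>F. val i c / 8)"
          by (rule sum.cong[OF refl]) (simp add: a_def val_def sgn_mul_self)
        finally show ?thesis by (simp add: sum_divide_distrib)
      qed
      have WN: "ptensor_dual_norm p0 W \<le> 1"
      proof (rule NB[OF WD, of 1])
        fix s t and x :: 'x
        have "W (dlt s) x - W (dlt t) x = (\<Sum>c\<in>F. a c * (Dlt i c s x - Dlt i c t x))"
          unfolding W_def Hdlt by (simp add: sum_subtractf right_diff_distrib)
        also have "\<bar>\<dots>\<bar> \<le> 2 * (1/8) * (4 * norm x) * dist s t"
        proof (rule disjoint_sum_lip[OF F(1)])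
          fix c assume c: "c \<in> F"
          show "\<bar>Dlt i c s x - Dlt i c t x\<bar> \<le> 4 * norm x * dist s t"
            using lipD[OF i c] unfolding lipG_def by (simp add: mult.commute mult.left_commute)
        next
          fix c y assume "c \<in> F" "R0 \<le> dist y c"
          then show "Dlt i c y x = 0" by (rule Dlt_far[OF i])
        next
          fix c c' assume "c \<in> F" "c' \<in> F" "c \<noteq> c'"
          then show "2 * R0 \<le> dist c c'" by (rule sep)
        next
          fix c assume "c \<in> F"
          show "\<bar>a c\<bar> \<le> 1/8" unfolding a_def by (simp add: abs_sgn_eq)
        qed auto
        finally show "\<bar>W (dlt s) x - W (dlt t) x\<bar> \<le> 1 * dist s t * norm x" by (simp add: mult.commute)
      qed simp
      have "\<bar>z i W\<bar> \<le> 1" using V_NN_ge[OF zV[OF i] WD WN] zN[OF i] by simp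
      then show ?thesis unfolding zW by simp
    qed
    have total: "(\<Sum>c\<in>F. \<Sum>i<n. val i c) \<le> 8 * real n"
    proof -
      have "(\<Sum>c\<in>F. \<Sum>i<n. val i c) = (\<Sum>i<n. \<Sum>c\<in>F. val i c)" by (rule sum.swap)
      also have "\<dots> \<le> (\<Sum>i<n. 8)" by (rule sum_mono) (use sum_c in auto)
      finally show ?thesis by simp
    qed
    obtain c where c: "c \<in> F" and cval: "(\<Sum>i<n. val i c) \<le> 8 * real n / real (card F)"
      using avg_exists[OF F(1) Fne total] by blast
    have valc: "val i c \<le> \<delta>" if i: "i < n" for i
    proof -
      have "val i c \<le> (\<Sum>i<n. val i c)"
        by (rule member_le_sum) (use i in \<open>auto simp: val_def\<close>)
      then show ?thesis using cval cardF by linarith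
    qed
    define q where "q = qf c"
    define d where "d = dd c"
    have d0: "d > 0" unfolding d_def using dd0[OF c] .
    have qc: "dist q c = d" unfolding q_def d_def dd_def ..
    have cq: "dist c q = d" using qc by (simp add: dist_commute)
    define y where "y = (\<lambda>B :: ((('m \<Rightarrow> real) \<Rightarrow> real) \<Rightarrow> 'x \<Rightarrow> real). B (mol c q) x0)"
    have ybound: "\<bar>y B\<bar> \<le> ptensor_dual_norm p0 B" if "B \<in> ptensor_dual p0" for B
      unfolding y_def by (rule N_ge[OF that fs_mol lipdual_mol]) (simp add: nx0)
    have yV: "y \<in> ptensor_bidual p0"
      unfolding ptensor_bidual_def
    proof (intro CollectI conjI ballI allI)
      show "\<exists>K. \<forall>B\<in>ptensor_dual p0. \<bar>y B\<bar> \<le> K * ptensor_dual_norm p0 B"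
        using ybound by (intro exI[of _ 1]) simp
    qed (simp_all add: y_def)
    have yle: "ptensor_bidual_norm p0 y \<le> 1"
      by (rule NN_le) (use ybound in force)
    define G0 where "G0 t x = (dist t q - dist p0 q) * \<phi> x" for t and x :: 'x
    have lipG0: "lipG p0 1 G0" unfolding lipG_def
    proof (intro conjI allI)
      fix s t and x :: 'x
      have "\<bar>G0 s x - G0 t x\<bar> = \<bar>dist s q - dist t q\<bar> * \<bar>\<phi> x\<bar>" unfolding G0_def
        by (simp add: left_diff_distrib[symmetric] abs_mult)
      also have "\<dots> \<le> dist s t * norm x" using dist_diff_abs[of s q t] \<phi>3 by (intro mult_mono) auto
      finally show "\<bar>G0 s x - G0 t x\<bar> \<le> 1 * dist s t * norm x" by simp
    qed (auto simp: G0_def \<phi>1 \<phi>2 algebra_simps)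
    define B0 where "B0 = SS 1 G0"
    have B0D: "B0 \<in> ptensor_dual p0" unfolding B0_def by (rule SS_in[OF lipG0])
    have B0dlt: "B0 (dlt t) x = G0 t x" for t x unfolding B0_def by (rule SS_dlt) simp
    have B0N: "ptensor_dual_norm p0 B0 \<le> 1"
      by (rule NB[OF B0D, of 1]) (use lipG0 in \<open>simp_all add: B0dlt lipG_def\<close>)
    have yB0: "y B0 = 1"
      unfolding y_def D_mol[OF B0D] B0dlt G0_def using d0 cq \<phi>x0 by simp
    have ybdd: "bdd_above {\<bar>y B\<bar> | B. B \<in> ptensor_dual p0 \<and> ptensor_dual_norm p0 B \<le> 1}"
    proof -
      have "\<bar>y B\<bar> \<le> 1" if "B \<in> ptensor_dual p0" "ptensor_dual_norm p0 B \<le> 1" for B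
        using ybound[OF that(1)] that(2) by linarith
      then show ?thesis unfolding bdd_above_def by force
    qed
    have yge: "1 \<le> ptensor_bidual_norm p0 y"
      using NN_ge[OF ybdd B0D B0N] yB0 by simp
    have yN: "ptensor_bidual_norm p0 y = 1" using yle yge by simp
    have far: "2 - e \<le> ptensor_bidual_norm p0 (\<lambda>t. z i t - y t)" if i: "i < n" for i
    proof -
      have BiD: "Bi i \<in> ptensor_dual p0" and Biz: "z i (Bi i) > 1 - \<delta>" using Bi[OF i] by auto
      define Bn where "Bn = (\<lambda>mu x. (\<lambda>mu x. (1 - \<delta>) * Bi i mu x) mu x + H i c mu x)"
      have BnD: "Bn \<in> ptensor_dual p0" unfolding Bn_def by (rule D_add[OF D_scale[OF BiD] HD[OF i c]])
      have Bndlt: "Bn (dlt t) x = (1 - \<delta>) * Gi i t x + Dl (Gi i) \<phi> c \<delta> (dd c) t x" for t x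
        unfolding Bn_def Hdlt Gi_def Dlt_def by simp
      have BnN: "ptensor_dual_norm p0 Bn \<le> 1"
      proof (rule NB[OF BnD, of 1])
        fix s t and x :: 'x
        show "\<bar>Bn (dlt s) x - Bn (dlt t) x\<bar> \<le> 1 * dist s t * norm x"
          unfolding Bndlt using Gn_lip[OF ctx[OF i] dd0[OF c]] by simp
      qed simp
      have zBn: "z i Bn = (1 - \<delta>) * z i (Bi i) + z i (H i c)"
        unfolding Bn_def V_add[OF zV[OF i] D_scale[OF BiD] HD[OF i c]] V_scale[OF zV[OF i] BiD] ..
      have zBn_ge: "z i Bn \<ge> (1 - \<delta>) * (1 - \<delta>) - \<delta>"
      proof -
        have "(1 - \<delta>) * (1 - \<delta>) \<le> (1 - \<delta>) * z i (Bi i)" using Biz \<delta>1 by (intro mult_left_mono) auto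
        moreover have "z i (H i c) \<ge> - \<delta>" using valc[OF i] unfolding val_def by linarith
        ultimately show ?thesis unfolding zBn by linarith
      qed
      have yBn: "y Bn = -1"
      proof -
        have "Bn (dlt c) x0 = (1 - \<delta>) * Gi i c x0 - d"
          unfolding Bndlt Dl_c[OF ctx[OF i] dd0[OF c]] using \<phi>x0 d_def by simp
        moreover have "Bn (dlt q) x0 = (1 - \<delta>) * Gi i c x0"
          unfolding Bndlt Dl_q[OF ctx[OF i] dd0[OF c] qc[unfolded d_def]] by (simp add: algebra_simps)
        ultimately show ?thesis unfolding y_def D_mol[OF BnD] cq using d0 by simp
      qed
      have bdd: "bdd_above {\<bar>z i B - y B\<bar> | B. B \<in> ptensor_dual p0 \<and> ptensor_dual_norm p0 B \<le> 1}"
      proof -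
        have "\<bar>z i B - y B\<bar> \<le> 2" if "B \<in> ptensor_dual p0" "ptensor_dual_norm p0 B \<le> 1" for B
          using V_NN_ge[OF zV[OF i] that] zN[OF i] ybound[OF that(1)] that(2) by linarith
        then show ?thesis unfolding bdd_above_def by force
      qed
      have "\<bar>z i Bn - y Bn\<bar> \<le> ptensor_bidual_norm p0 (\<lambda>t. z i t - y t)"
        using NN_ge[of "\<lambda>t. z i t - y t", OF _ BnD BnN] bdd by simp
      moreover have "2 - e \<le> z i Bn - y Bn"
      proof -
        have "(1 - \<delta>) * (1 - \<delta>) - \<delta> + 1 \<ge> 2 - 3 * \<delta>" by (simp add: algebra_simps)
        then show ?thesis using zBn_ge yBn \<delta>e by linarith
      qed
      ultimately show ?thesis by linarith
    qed
    show "\<exists>y\<in>ptensor_bidual p0. ptensor_bidual_norm p0 y = 1 \<and> (\<forall>i<n. 2 - e \<le> ptensor_bidual_norm p0 (\<lambda>t. z i t - y t))"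
      using yV yN far by blast
  qed
qed

end
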